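(* Let $X$ and $Y$ be compact Hausdorff spaces, and let $E\subseteq C(X)$ and $F\subseteq C(Y)$ be Riesz subspaces, dense for the supremum norm, containing the respective constant functions. Let $G$ be an Archimedean Riesz space and $\phi:E\times F\to G$ a Riesz bimorphism, and let $\chi:E\times F\to C(X\times Y)$ be the natural bilinear embedding, $\chi(f,g)(x,y)=f(x)g(y)$. Let $E\overline{\otimes}_\chi F$ be the Riesz subspace of $C(X\times Y)$ generated by $\chi(E\times F)$. Then there is a unique Riesz homomorphism $T:E\overline{\otimes}_\chi F\to G$ such that $\phi=T\circ\chi$. Furthermore, if $\phi$ is bi-injective then $T$ is a Riesz isomorphism of $E\overline{\otimes}_\chi F$ onto $E\overline{\otimes}_\phi F$, the Riesz subspace of $G$ generated by $\phi(E\times F)$.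
   Context: A linear map $T$ between Riesz spaces is a Riesz homomorphism if $T(x\vee y)=Tx\vee Ty$. A bilinear map $\phi:E\times F\to G$ is a Riesz bimorphism if $\phi(\cdot,y)$ is a Riesz homomorphism for every $y\in F_+$ and $\phi(x,\cdot)$ is a Riesz homomorphism for every $x\in E_+$. $\phi$ is bi-injective if $\phi(x,y)=0$ implies $x=0$ or $y=0$. *)

theory Defs
  imports "HOL-Analysis.Analysis"
begin

class riesz_space = ordered_real_vector + lattice

class archimedean_riesz_space = riesz_space +
  assumes archimedean: "0 \<le> x \<Longrightarrow> (\<forall>n::nat. real n *\<^sub>R x \<le> y) \<Longrightarrow> x = 0"

definition cfun :: "('a::topological_space \<Rightarrow> real) set" where
  "cfun = {f. continuous_on UNIV f}"

definition riesz_subspace_fun :: "('a \<Rightarrow> real) set \<Rightarrow> bool" where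
  "riesz_subspace_fun S \<longleftrightarrow> (\<lambda>x. 0) \<in> S \<and>
     (\<forall>f\<in>S. \<forall>g\<in>S. (\<lambda>x. f x + g x) \<in> S) \<and>
     (\<forall>c. \<forall>f\<in>S. (\<lambda>x. c * f x) \<in> S) \<and>
     (\<forall>f\<in>S. \<forall>g\<in>S. (\<lambda>x. max (f x) (g x)) \<in> S)"

definition gen_riesz_fun :: "('a \<Rightarrow> real) set \<Rightarrow> ('a \<Rightarrow> real) set" where
  "gen_riesz_fun S = \<Inter>{W. riesz_subspace_fun W \<and> S \<subseteq> W}"

definition riesz_subspace :: "'g::riesz_space set \<Rightarrow> bool" where
  "riesz_subspace S \<longleftrightarrow> 0 \<in> S \<and> (\<forall>x\<in>S. \<forall>y\<in>S. x + y \<in> S) \<and>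
     (\<forall>c. \<forall>x\<in>S. c *\<^sub>R x \<in> S) \<and> (\<forall>x\<in>S. \<forall>y\<in>S. sup x y \<in> S)"

definition gen_riesz :: "'g::riesz_space set \<Rightarrow> 'g set" where
  "gen_riesz S = \<Inter>{W. riesz_subspace W \<and> S \<subseteq> W}"

definition riesz_hom_on :: "('a \<Rightarrow> real) set \<Rightarrow> (('a \<Rightarrow> real) \<Rightarrow> 'g::riesz_space) \<Rightarrow> bool" where
  "riesz_hom_on D T \<longleftrightarrow>
     (\<forall>f\<in>D. \<forall>g\<in>D. T (\<lambda>x. f x + g x) = T f + T g) \<and>
     (\<forall>c. \<forall>f\<in>D. T (\<lambda>x. c * f x) = c *\<^sub>R T f) \<and>
     (\<forall>f\<in>D. \<forall>g\<in>D. T (\<lambda>x. max (f x) (g x)) = sup (T f) (T g))"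

definition riesz_iso_onto :: "('a \<Rightarrow> real) set \<Rightarrow> 'g::riesz_space set \<Rightarrow> (('a \<Rightarrow> real) \<Rightarrow> 'g) \<Rightarrow> bool" where
  "riesz_iso_onto D W T \<longleftrightarrow> riesz_hom_on D T \<and> bij_betw T D W \<and>
     (\<forall>u\<in>W. \<forall>v\<in>W. inv_into D T (sup u v) = (\<lambda>x. max (inv_into D T u x) (inv_into D T v x)))"

definition bilinear_on :: "('a \<Rightarrow> real) set \<Rightarrow> ('b \<Rightarrow> real) set \<Rightarrow>
    (('a \<Rightarrow> real) \<Rightarrow> ('b \<Rightarrow> real) \<Rightarrow> 'g::real_vector) \<Rightarrow> bool" where
  "bilinear_on E F \<phi> \<longleftrightarrow>
     (\<forall>g\<in>F. \<forall>f1\<in>E. \<forall>f2\<in>E. \<phi> (\<lambda>x. f1 x + f2 x) g = \<phi> f1 g + \<phi> f2 g) \<and>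
     (\<forall>g\<in>F. \<forall>c. \<forall>f\<in>E. \<phi> (\<lambda>x. c * f x) g = c *\<^sub>R \<phi> f g) \<and>
     (\<forall>f\<in>E. \<forall>g1\<in>F. \<forall>g2\<in>F. \<phi> f (\<lambda>y. g1 y + g2 y) = \<phi> f g1 + \<phi> f g2) \<and>
     (\<forall>f\<in>E. \<forall>c. \<forall>g\<in>F. \<phi> f (\<lambda>y. c * g y) = c *\<^sub>R \<phi> f g)"

definition riesz_bimorphism :: "('a \<Rightarrow> real) set \<Rightarrow> ('b \<Rightarrow> real) set \<Rightarrow>
    (('a \<Rightarrow> real) \<Rightarrow> ('b \<Rightarrow> real) \<Rightarrow> 'g::riesz_space) \<Rightarrow> bool" where
  "riesz_bimorphism E F \<phi> \<longleftrightarrow> bilinear_on E F \<phi> \<and>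
     (\<forall>g\<in>F. (\<forall>y. 0 \<le> g y) \<longrightarrow> riesz_hom_on E (\<lambda>f. \<phi> f g)) \<and>
     (\<forall>f\<in>E. (\<forall>x. 0 \<le> f x) \<longrightarrow> riesz_hom_on F (\<lambda>g. \<phi> f g))"

definition bi_injective :: "('a \<Rightarrow> real) set \<Rightarrow> ('b \<Rightarrow> real) set \<Rightarrow>
    (('a \<Rightarrow> real) \<Rightarrow> ('b \<Rightarrow> real) \<Rightarrow> 'g::zero) \<Rightarrow> bool" where
  "bi_injective E F \<phi> \<longleftrightarrow>
     (\<forall>f\<in>E. \<forall>g\<in>F. \<phi> f g = 0 \<longrightarrow> f = (\<lambda>x. 0) \<or> g = (\<lambda>y. 0))"

definition sup_dense :: "('a::topological_space \<Rightarrow> real) set \<Rightarrow> bool" where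
  "sup_dense E \<longleftrightarrow> (\<forall>f\<in>cfun. \<forall>e>0. \<exists>g\<in>E. \<forall>x. \<bar>f x - g x\<bar> < e)"

definition chi :: "('a \<Rightarrow> real) \<Rightarrow> ('b \<Rightarrow> real) \<Rightarrow> ('a \<times> 'b \<Rightarrow> real)" where
  "chi f g = (\<lambda>(x, y). f x * g y)"

end

theory Submission
  imports Defs "HOL-Library.Lattice_Algebras"
begin

context riesz_space begin
subclass lattice_ab_group_add ..
end

definition absg :: "'g::riesz_space \<Rightarrow> 'g" where "absg x = sup x (- x)"

lemma absg_ge: "x \<le> absg x" "- x \<le> absg x" by (auto simp: absg_def)

lemma absg_nonneg: "0 \<le> absg (x::'g::riesz_space)"
proof -
  have "0 \<le> absg x + absg x"
    using add_mono[OF absg_ge(1) absg_ge(2), of x x] by simp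
  then show ?thesis by simp
qed

lemma absg_le: "x \<le> y \<Longrightarrow> - x \<le> y \<Longrightarrow> absg x \<le> (y::'g::riesz_space)"
  by (simp add: absg_def)

lemma absg_add: "absg (x + y) \<le> absg x + absg (y::'g::riesz_space)"
  apply (rule absg_le)
  using add_mono[OF absg_ge(1) absg_ge(1), of x y] add_mono[OF absg_ge(2) absg_ge(2), of x y]
  by (auto simp: algebra_simps)

lemma absg_zero[simp]: "absg (0::'g::riesz_space) = 0" by (simp add: absg_def)

lemma absg_minus: "absg (- x) = absg (x::'g::riesz_space)" by (simp add: absg_def sup_commute)

lemma scaleR_sup: "0 \<le> c \<Longrightarrow> c *\<^sub>R sup a b = sup (c *\<^sub>R a) (c *\<^sub>R (b::'g::riesz_space))"
proof (cases "c = 0")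
  case False
  assume c: "0 \<le> c"
  then have cp: "0 < c" using False by simp
  have ic: "0 \<le> 1/c" using cp by simp
  have e1: "(1/c) *\<^sub>R (c *\<^sub>R x) = x" for x :: 'g using cp by simp
  show ?thesis
  proof (rule order.antisym)
    have "(1/c) *\<^sub>R (c *\<^sub>R a) \<le> (1/c) *\<^sub>R sup (c *\<^sub>R a) (c *\<^sub>R b)"
      by (rule scaleR_left_mono[OF sup_ge1 ic])
    moreover have "(1/c) *\<^sub>R (c *\<^sub>R b) \<le> (1/c) *\<^sub>R sup (c *\<^sub>R a) (c *\<^sub>R b)"
      by (rule scaleR_left_mono[OF sup_ge2 ic])
    ultimately have "sup a b \<le> (1/c) *\<^sub>R sup (c *\<^sub>R a) (c *\<^sub>R b)"
      unfolding e1 by (rule sup_least)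
    from scaleR_left_mono[OF this c] show "c *\<^sub>R sup a b \<le> sup (c *\<^sub>R a) (c *\<^sub>R b)"
      using cp by simp
    show "sup (c *\<^sub>R a) (c *\<^sub>R b) \<le> c *\<^sub>R sup a b"
      by (rule sup_least; rule scaleR_left_mono[OF _ c]; simp)
  qed
qed simp

lemma scaleR_inf: "0 \<le> c \<Longrightarrow> c *\<^sub>R inf a b = inf (c *\<^sub>R a) (c *\<^sub>R (b::'g::riesz_space))"
proof -
  assume c: "0 \<le> c"
  have "c *\<^sub>R inf a b = - (c *\<^sub>R sup (-a) (-b))"
    by (simp only: inf_eq_neg_sup[of a b] scaleR_minus_right)
  also have "\<dots> = - sup (- (c *\<^sub>R a)) (- (c *\<^sub>R b))"
    by (simp only: scaleR_sup[OF c] scaleR_minus_right)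
  also have "\<dots> = inf (c *\<^sub>R a) (c *\<^sub>R b)" by (simp only: inf_eq_neg_sup[symmetric])
  finally show ?thesis .
qed

lemma absg_scaleR: "absg (c *\<^sub>R x) = \<bar>c\<bar> *\<^sub>R absg (x::'g::riesz_space)"
proof (cases "0 \<le> c")
  case True
  have "absg (c *\<^sub>R x) = sup (c *\<^sub>R x) (c *\<^sub>R (-x))" by (simp only: absg_def scaleR_minus_right)
  also have "\<dots> = c *\<^sub>R absg x" by (simp only: absg_def scaleR_sup[OF True])
  finally show ?thesis using True by simp
next
  case False
  then have c: "0 \<le> -c" by simp
  have "absg (c *\<^sub>R x) = sup ((-c) *\<^sub>R (-x)) ((-c) *\<^sub>R x)" by (simp only: absg_def scaleR_minus_right scaleR_minus_left minus_minus)
  also have "\<dots> = (-c) *\<^sub>R absg x" by (simp only: absg_def scaleR_sup[OF c] sup_commute)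
  finally show ?thesis using False by simp
qed

lemma inf_add_le: "0 \<le> a \<Longrightarrow> 0 \<le> b \<Longrightarrow> 0 \<le> c \<Longrightarrow>
   inf a (b + c) \<le> inf a b + inf a (c::'g::riesz_space)"
proof -
  assume a: "0 \<le> a" and b: "0 \<le> b" and c: "0 \<le> c"
  let ?d = "inf a (b + c)"
  have "?d - inf a b = sup (?d - a) (?d - b)" by (simp add: diff_inf_eq_sup add_sup_distrib_left)
  also have "\<dots> \<le> inf a c"
  proof (rule sup_least)
    have "?d - a \<le> 0" by simp
    also have "0 \<le> inf a c" using a c by simp
    finally show "?d - a \<le> inf a c" .
    have "?d - b \<le> c" using inf_le2[of a "b+c"] by (simp add: algebra_simps)
    moreover have "?d - b \<le> a" using inf_le1[of a "b+c"] b by (simp add: algebra_simps) (metis add_increasing2 inf.coboundedI1 order_refl)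
    ultimately show "?d - b \<le> inf a c" by simp
  qed
  finally show ?thesis by (simp only: diff_le_eq add.commute)
qed

lemma absg_sup_diff: "absg (sup a b - sup c d) \<le> absg (a - c) + absg (b - (d::'g::riesz_space))"
proof -
  let ?m = "absg (a - c) + absg (b - d)"
  have m1: "absg (a - c) \<le> ?m" "absg (b - d) \<le> ?m" using absg_nonneg by (auto intro: add_increasing add_increasing2)
  have "a \<le> sup c d + ?m"
  proof -
    have "a \<le> c + absg (a - c)" using absg_ge(1)[of "a - c"] by (simp add: algebra_simps)
    also have "\<dots> \<le> sup c d + ?m" using m1 by (intro add_mono) auto
    finally show ?thesis .
  qed
  moreover have "b \<le> sup c d + ?m"
  proof -
    have "b \<le> d + absg (b - d)" using absg_ge(1)[of "b - d"] by (simp add: algebra_simps)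
    also have "\<dots> \<le> sup c d + ?m" using m1 by (intro add_mono) auto
    finally show ?thesis .
  qed
  moreover have "c \<le> sup a b + ?m"
  proof -
    have "c \<le> a + absg (a - c)" using absg_ge(2)[of "a - c"] by (simp add: algebra_simps)
    also have "\<dots> \<le> sup a b + ?m" using m1 by (intro add_mono) auto
    finally show ?thesis .
  qed
  moreover have "d \<le> sup a b + ?m"
  proof -
    have "d \<le> b + absg (b - d)" using absg_ge(2)[of "b - d"] by (simp add: algebra_simps)
    also have "\<dots> \<le> sup a b + ?m" using m1 by (intro add_mono) auto
    finally show ?thesis .
  qed
  ultimately have "sup a b \<le> sup c d + ?m" "sup c d \<le> sup a b + ?m" by simp_all
  then have "sup a b - sup c d \<le> ?m" "sup c d - sup a b \<le> ?m"
    by (simp_all only: diff_le_eq add.commute)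
  then show ?thesis
    using absg_le[of "sup a b - sup c d" ?m] by (simp only: minus_diff_eq)
qed

lemma inf_scale_le: "0 \<le> a \<Longrightarrow> 0 \<le> b \<Longrightarrow> 0 \<le> l \<Longrightarrow> 0 \<le> m \<Longrightarrow>
   inf (l *\<^sub>R a) (m *\<^sub>R b) \<le> max l m *\<^sub>R inf a (b::'g::riesz_space)"
proof -
  assume a: "0 \<le> a" and b: "0 \<le> b" and l: "0 \<le> l" and m: "0 \<le> m"
  have "inf (l *\<^sub>R a) (m *\<^sub>R b) \<le> inf (max l m *\<^sub>R a) (max l m *\<^sub>R b)"
    using scaleR_right_mono[of l "max l m" a] scaleR_right_mono[of m "max l m" b] a b
    by (intro inf_mono) auto
  also have "\<dots> = max l m *\<^sub>R inf a b" using l by (simp add: scaleR_inf)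
  finally show ?thesis .
qed

lemma inf_sum_list_le: "0 \<le> a \<Longrightarrow> (\<And>i. i \<in> set xs \<Longrightarrow> 0 \<le> b i) \<Longrightarrow>
   inf a (sum_list (map b xs)) \<le> sum_list (map (\<lambda>i. inf a (b i)) (xs::'i list)) \<and>
   0 \<le> sum_list (map b xs :: 'g::riesz_space list)"
proof (induction xs)
  case Nil then show ?case by simp
next
  case (Cons x xs)
  then have IH: "inf a (sum_list (map b xs)) \<le> sum_list (map (\<lambda>i. inf a (b i)) xs)"
     "0 \<le> sum_list (map b xs)" by auto
  have bx: "0 \<le> b x" using Cons by simp
  have "inf a (sum_list (map b (x # xs))) = inf a (b x + sum_list (map b xs))" by simp
  also have "\<dots> \<le> inf a (b x) + inf a (sum_list (map b xs))" using inf_add_le[OF Cons.prems(1) bx IH(2)] .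
  also have "\<dots> \<le> sum_list (map (\<lambda>i. inf a (b i)) (x#xs))" using IH(1) by simp
  finally show ?case using IH(2) bx by simp
qed

section \<open>Riesz subspaces of function spaces\<close>

lemma rs_add: "riesz_subspace_fun S \<Longrightarrow> f \<in> S \<Longrightarrow> g \<in> S \<Longrightarrow> (\<lambda>x. f x + g x) \<in> S"
  by (simp add: riesz_subspace_fun_def)
lemma rs_scale: "riesz_subspace_fun S \<Longrightarrow> f \<in> S \<Longrightarrow> (\<lambda>x. c * f x) \<in> S"
  by (simp add: riesz_subspace_fun_def)
lemma rs_max: "riesz_subspace_fun S \<Longrightarrow> f \<in> S \<Longrightarrow> g \<in> S \<Longrightarrow> (\<lambda>x. max (f x) (g x)) \<in> S"
  by (simp add: riesz_subspace_fun_def)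
lemma rs_zero: "riesz_subspace_fun S \<Longrightarrow> (\<lambda>x. 0) \<in> S"
  by (simp add: riesz_subspace_fun_def)
lemma rs_uminus: "riesz_subspace_fun S \<Longrightarrow> f \<in> S \<Longrightarrow> (\<lambda>x. - f x) \<in> S"
  using rs_scale[of S f "-1"] by simp
lemma rs_diff: "riesz_subspace_fun S \<Longrightarrow> f \<in> S \<Longrightarrow> g \<in> S \<Longrightarrow> (\<lambda>x. f x - g x) \<in> S"
  using rs_add[of S f "\<lambda>x. - g x"] rs_uminus[of S g] by simp
lemma rs_min: "riesz_subspace_fun S \<Longrightarrow> f \<in> S \<Longrightarrow> g \<in> S \<Longrightarrow> (\<lambda>x. min (f x) (g x)) \<in> S"
proof -
  assume a: "riesz_subspace_fun S" "f \<in> S" "g \<in> S"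
  have "(\<lambda>x. - max (- f x) (- g x)) \<in> S"
    using a by (intro rs_uminus[of S "\<lambda>x. max (- f x) (- g x)"] rs_max rs_uminus) auto
  moreover have "(\<lambda>x. - max (- f x) (- g x)) = (\<lambda>x. min (f x) (g x))" by (auto simp: fun_eq_iff)
  ultimately show ?thesis by (simp only:)
qed
lemma rs_abs: "riesz_subspace_fun S \<Longrightarrow> f \<in> S \<Longrightarrow> (\<lambda>x. \<bar>f x\<bar>) \<in> S"
proof -
  assume a: "riesz_subspace_fun S" "f \<in> S"
  have "(\<lambda>x. max (f x) (- f x)) \<in> S" using a by (intro rs_max rs_uminus)
  moreover have "(\<lambda>x. max (f x) (- f x)) = (\<lambda>x. \<bar>f x\<bar>)" by (auto simp: fun_eq_iff)
  ultimately show ?thesis by (simp only:)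
qed
lemma rs_divide: "riesz_subspace_fun S \<Longrightarrow> f \<in> S \<Longrightarrow> (\<lambda>x. f x / c) \<in> S"
  using rs_scale[of S f "1/c"] by simp
lemma rs_sum_list: "riesz_subspace_fun S \<Longrightarrow> (\<And>p. p \<in> set P \<Longrightarrow> h p \<in> S) \<Longrightarrow>
  (\<lambda>x. \<Sum>p\<leftarrow>P. h p x) \<in> S"
proof (induction P)
  case Nil then show ?case using rs_zero by simp
next
  case (Cons q P)
  then show ?case using rs_add[of S "h q" "\<lambda>x. \<Sum>p\<leftarrow>P. h p x"] by simp
qed

section \<open>Linear maps and Riesz homomorphisms on function spaces\<close>

definition lin_on :: "('a \<Rightarrow> real) set \<Rightarrow> (('a \<Rightarrow> real) \<Rightarrow> 'g::real_vector) \<Rightarrow> bool" where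
  "lin_on S T \<longleftrightarrow> (\<forall>f\<in>S. \<forall>g\<in>S. T (\<lambda>x. f x + g x) = T f + T g) \<and>
     (\<forall>c. \<forall>f\<in>S. T (\<lambda>x. c * f x) = c *\<^sub>R T f)"

lemma hom_lin: "riesz_hom_on S T \<Longrightarrow> lin_on S T"
  by (simp add: riesz_hom_on_def lin_on_def)

lemma lin_add: "lin_on S T \<Longrightarrow> f \<in> S \<Longrightarrow> g \<in> S \<Longrightarrow> T (\<lambda>x. f x + g x) = T f + T g"
  by (simp add: lin_on_def)
lemma lin_scale: "lin_on S T \<Longrightarrow> f \<in> S \<Longrightarrow> T (\<lambda>x. c * f x) = c *\<^sub>R T f"
  by (simp add: lin_on_def)
lemma lin_zero: "lin_on S T \<Longrightarrow> riesz_subspace_fun S \<Longrightarrow> T (\<lambda>x. 0) = 0"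
  using lin_scale[of S T "\<lambda>x. 0" 0] rs_zero[of S] by simp
lemma lin_uminus: "lin_on S T \<Longrightarrow> f \<in> S \<Longrightarrow> T (\<lambda>x. - f x) = - T f"
  using lin_scale[of S T f "-1"] by simp
lemma lin_diff: "lin_on S T \<Longrightarrow> riesz_subspace_fun S \<Longrightarrow> f \<in> S \<Longrightarrow> g \<in> S \<Longrightarrow>
   T (\<lambda>x. f x - g x) = T f - T g"
  using lin_add[of S T f "\<lambda>x. - g x"] lin_uminus[of S T g] rs_uminus[of S g] by simp
lemma lin_sum_list: "lin_on S T \<Longrightarrow> riesz_subspace_fun S \<Longrightarrow> (\<And>p. p \<in> set P \<Longrightarrow> h p \<in> S) \<Longrightarrow>
  T (\<lambda>x. \<Sum>p\<leftarrow>P. h p x) = (\<Sum>p\<leftarrow>P. T (h p))"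
proof (induction P)
  case Nil then show ?case using lin_zero by simp
next
  case (Cons q P)
  then show ?case
    using lin_add[of S T "h q" "\<lambda>x. \<Sum>p\<leftarrow>P. h p x"] rs_sum_list[of S P h] by simp
qed

lemma hom_max: "riesz_hom_on S T \<Longrightarrow> f \<in> S \<Longrightarrow> g \<in> S \<Longrightarrow> T (\<lambda>x. max (f x) (g x)) = sup (T f) (T g)"
  by (simp add: riesz_hom_on_def)

lemma hom_min: "riesz_hom_on S T \<Longrightarrow> riesz_subspace_fun S \<Longrightarrow> f \<in> S \<Longrightarrow> g \<in> S \<Longrightarrow>
   T (\<lambda>x. min (f x) (g x)) = inf (T f) (T g)"
proof -
  assume H: "riesz_hom_on S T" and rs: "riesz_subspace_fun S" and f: "f \<in> S" and g: "g \<in> S"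
  have "(\<lambda>x. min (f x) (g x)) = (\<lambda>x. - max (- f x) (- g x))" by (auto simp: fun_eq_iff)
  then have "T (\<lambda>x. min (f x) (g x)) = - T (\<lambda>x. max (- f x) (- g x))"
    using lin_uminus[OF hom_lin[OF H] rs_max[OF rs rs_uminus[OF rs f] rs_uminus[OF rs g]]] by (simp only:)
  also have "\<dots> = - sup (- T f) (- T g)"
    using hom_max[OF H rs_uminus[OF rs f] rs_uminus[OF rs g]] lin_uminus[OF hom_lin[OF H] f]
      lin_uminus[OF hom_lin[OF H] g] by (simp only:)
  also have "\<dots> = inf (T f) (T g)" by (rule inf_eq_neg_sup[symmetric])
  finally show ?thesis .
qed

lemma hom_abs: "riesz_hom_on S T \<Longrightarrow> riesz_subspace_fun S \<Longrightarrow> f \<in> S \<Longrightarrow>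
   T (\<lambda>x. \<bar>f x\<bar>) = absg (T f)"
proof -
  assume H: "riesz_hom_on S T" and rs: "riesz_subspace_fun S" and f: "f \<in> S"
  have "(\<lambda>x. \<bar>f x\<bar>) = (\<lambda>x. max (f x) (- f x))" by (auto simp: fun_eq_iff)
  then show ?thesis using hom_max[OF H f rs_uminus[OF rs f]] lin_uminus[OF hom_lin[OF H] f]
    by (simp only: absg_def)
qed

lemma hom_pos: "riesz_hom_on S T \<Longrightarrow> riesz_subspace_fun S \<Longrightarrow> f \<in> S \<Longrightarrow> (\<And>x. 0 \<le> f x) \<Longrightarrow> 0 \<le> T f"
proof -
  assume H: "riesz_hom_on S T" and rs: "riesz_subspace_fun S" and f: "f \<in> S" and p: "\<And>x. 0 \<le> f x"
  have "(\<lambda>x. max (f x) 0) = f" using p by (auto simp: fun_eq_iff)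
  then have "T f = sup (T f) (T (\<lambda>x. 0))" using hom_max[OF H f rs_zero[OF rs]] by simp
  then show ?thesis using lin_zero[OF hom_lin[OF H] rs] by (metis sup.orderI)
qed

lemma hom_mono: "riesz_hom_on S T \<Longrightarrow> riesz_subspace_fun S \<Longrightarrow> f \<in> S \<Longrightarrow> g \<in> S \<Longrightarrow> (\<And>x. f x \<le> g x) \<Longrightarrow> T f \<le> T g"
proof -
  assume H: "riesz_hom_on S T" and rs: "riesz_subspace_fun S" and f: "f \<in> S" and g: "g \<in> S" and le: "\<And>x. f x \<le> g x"
  have "0 \<le> T (\<lambda>x. g x - f x)" using le by (intro hom_pos[OF H rs rs_diff[OF rs g f]]) simp
  then show ?thesis using lin_diff[OF hom_lin[OF H] rs g f] by simp
qed

definition cellok :: "('a \<Rightarrow> real) set \<Rightarrow> ('a \<Rightarrow> real) \<Rightarrow> ('a \<Rightarrow> real) \<Rightarrow> bool" where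
  "cellok S a b \<longleftrightarrow> a \<in> S \<and> b \<in> S \<and> (\<forall>x. 0 \<le> a x \<and> a x \<le> 1 \<and> 0 \<le> b x \<and> b x \<le> 1 \<and> (0 < a x \<longrightarrow> b x = 1))"

definition pw :: "('a \<Rightarrow> real) set \<Rightarrow> real \<Rightarrow> ('a \<Rightarrow> real) \<Rightarrow> bool" where
  "pw A \<delta> a \<longleftrightarrow> (\<forall>x x'. 0 < a x \<longrightarrow> 0 < a x' \<longrightarrow> (\<forall>f\<in>A. \<bar>f x - f x'\<bar> \<le> \<delta>))"

lemma sum_list_concat': "(\<Sum>p\<leftarrow>concat xss. h p) = (\<Sum>xs\<leftarrow>xss. \<Sum>p\<leftarrow>xs. h p)"
  by (induction xss) auto

lemma sum_list_half: "(\<Sum>p\<leftarrow>P. g p / 2) = (\<Sum>p\<leftarrow>P. g p) / (2::real)"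
  by (induction P) auto

lemma cover:
  assumes rs: "riesz_subspace_fun S" and cst: "\<And>c. (\<lambda>x. c) \<in> S"
    and A: "\<And>f. f \<in> set As \<Longrightarrow> f \<in> S \<and> (\<exists>M. \<forall>x. \<bar>f x\<bar> \<le> M)" and dpos: "0 < \<delta>"
  shows "\<exists>P. (\<forall>p\<in>set P. cellok S (fst p) (snd p) \<and> pw (set As) \<delta> (fst p)) \<and>
     (\<forall>x. 1 / 2 ^ length As \<le> (\<Sum>p\<leftarrow>P. fst p x) \<and> (\<Sum>p\<leftarrow>P. snd p x) \<le> 4 ^ length As)"
using A proof (induction As)
  case Nil
  let ?P = "[((\<lambda>x. 1::real), (\<lambda>x. 1::real))]"
  show ?case by (rule exI[of _ ?P]) (auto simp: cellok_def pw_def cst)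
next
  case (Cons f As)
  from Cons.prems have IHp: "\<And>g. g \<in> set As \<Longrightarrow> g \<in> S \<and> (\<exists>M. \<forall>x. \<bar>g x\<bar> \<le> M)" by auto
  from Cons.IH[OF IHp] obtain P where P1: "\<forall>p\<in>set P. cellok S (fst p) (snd p) \<and> pw (set As) \<delta> (fst p)"
    and P2: "\<forall>x. 1 / 2 ^ length As \<le> (\<Sum>p\<leftarrow>P. fst p x) \<and> (\<Sum>p\<leftarrow>P. snd p x) \<le> 4 ^ length As" by blast
  have fS: "f \<in> S" using Cons.prems by auto
  obtain M where M: "\<forall>x. \<bar>f x\<bar> \<le> M" using Cons.prems by auto
  define d where "d = \<delta> / 2"
  have dp: "0 < d" using dpos by (simp add: d_def)
  define N where "N = \<lceil>M / d\<rceil> + 1"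
  define hat where "hat j = (\<lambda>x. max 0 (1 - \<bar>f x / d - of_int j\<bar>))" for j :: int
  define hh where "hh j = (\<lambda>x. min 1 (max 0 (2 - \<bar>f x / d - of_int j\<bar>)))" for j :: int
  define Q where "Q j = map (\<lambda>p. ((\<lambda>x. min (fst p x) (hat j x)), (\<lambda>x. min (snd p x) (hh j x)))) P" for j
  define P' where "P' = concat (map Q [-N..N])"
  have hatS: "hat j \<in> S" for j unfolding hat_def
    by (intro rs_max rs_diff rs_abs rs_divide cst fS rs)
  have hhS: "hh j \<in> S" for j unfolding hh_def
    by (intro rs_min rs_max rs_diff rs_abs rs_divide cst fS rs)
  have sumP': "(\<Sum>p\<leftarrow>P'. h p) = (\<Sum>j\<in>{-N..N}. \<Sum>p\<leftarrow>P. h ((\<lambda>x. min (fst p x) (hat j x)), (\<lambda>x. min (snd p x) (hh j x))))" for h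
    unfolding P'_def sum_list_concat' by (simp add: Q_def o_def sum_list_distinct_conv_sum_set)
  have mem: "p' \<in> set P' \<Longrightarrow> \<exists>j p. p \<in> set P \<and> p' = ((\<lambda>x. min (fst p x) (hat j x)), (\<lambda>x. min (snd p x) (hh j x)))" for p'
    unfolding P'_def Q_def by fastforce
  have hat01: "0 \<le> hat j x" "hat j x \<le> 1" for j x unfolding hat_def by auto
  have hh01: "0 \<le> hh j x" "hh j x \<le> 1" for j x unfolding hh_def by auto
  have hat_hh: "0 < hat j x \<Longrightarrow> hh j x = 1" for j x unfolding hat_def hh_def by auto
  have hat_close: "0 < hat j x \<Longrightarrow> \<bar>f x / d - of_int j\<bar> < 1" for j x unfolding hat_def by auto
  have part1: "\<forall>p\<in>set P'. cellok S (fst p) (snd p) \<and> pw (set (f # As)) \<delta> (fst p)"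
  proof
    fix p' assume "p' \<in> set P'"
    then obtain j p where p: "p \<in> set P" and p': "p' = ((\<lambda>x. min (fst p x) (hat j x)), (\<lambda>x. min (snd p x) (hh j x)))"
      using mem by blast
    have cp: "cellok S (fst p) (snd p)" and pwp: "pw (set As) \<delta> (fst p)" using P1 p by auto
    have "cellok S (fst p') (snd p')"
      using cp hat01 hh01 hat_hh unfolding p' cellok_def
      by (auto intro!: rs_min rs hatS hhS simp: min_le_iff_disj)
    moreover have "pw (set (f # As)) \<delta> (fst p')"
      unfolding pw_def
    proof (intro allI impI ballI)
      fix x x' g assume x: "0 < fst p' x" and x': "0 < fst p' x'" and g: "g \<in> set (f # As)"
      have a: "0 < fst p x" "0 < hat j x" "0 < fst p x'" "0 < hat j x'" using x x' unfolding p' by auto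
      show "\<bar>g x - g x'\<bar> \<le> \<delta>"
      proof (cases "g = f")
        case True
        have "\<bar>f x / d - f x' / d\<bar> < 2" using hat_close[OF a(2)] hat_close[OF a(4)] by linarith
        then have "\<bar>f x - f x'\<bar> / d < 2" using dp by (simp add: diff_divide_distrib[symmetric])
        then have "\<bar>f x - f x'\<bar> < 2 * d" using dp by (simp add: divide_less_eq)
        then show ?thesis using True by (simp add: d_def)
      next
        case False
        then have "g \<in> set As" using g by simp
        then show ?thesis using pwp a unfolding pw_def by blast
      qed
    qed
    ultimately show "cellok S (fst p') (snd p') \<and> pw (set (f # As)) \<delta> (fst p')" by simp
  qed
  have part2: "1 / 2 ^ length (f # As) \<le> (\<Sum>p\<leftarrow>P'. fst p x) \<and> (\<Sum>p\<leftarrow>P'. snd p x) \<le> 4 ^ length (f # As)" for x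
  proof
    define t where "t = f x / d"
    have Pnn: "0 \<le> fst p x" "fst p x \<le> 1" "0 \<le> snd p x" "snd p x \<le> 1" if "p \<in> set P" for p
      using P1 that unfolding cellok_def by auto
    have tb: "\<bar>t\<bar> \<le> M / d" using M dp unfolding t_def by (simp add: divide_right_mono abs_divide)
    define j0 where "j0 = \<lfloor>t + 1/2\<rfloor>"
    have j0a: "of_int j0 \<le> t + 1/2" "t + 1/2 < of_int j0 + 1" unfolding j0_def by linarith+
    have "t - of_int j0 \<le> 1/2" "-(t - of_int j0) \<le> 1/2" using j0a by linarith+
    then have "\<bar>t - of_int j0\<bar> \<le> 1/2" by (simp only: abs_le_iff)
    then have hj0: "1/2 \<le> hat j0 x" unfolding hat_def t_def[symmetric] by simp
    have j0N: "j0 \<in> {-N..N}"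
    proof -
      have "t + 1/2 \<le> of_int \<lceil>M / d\<rceil> + 1/2" using tb le_of_int_ceiling[of "M/d"] by linarith
      then have u: "j0 \<le> N" using j0a unfolding N_def by linarith
      have "- of_int \<lceil>M / d\<rceil> - 1/2 \<le> t - 1/2" using tb le_of_int_ceiling[of "M/d"] by linarith
      then have "- real_of_int \<lceil>M / d\<rceil> - 1 < real_of_int j0" using j0a by linarith
      then have "- \<lceil>M / d\<rceil> - 1 < j0" by linarith
      then have "-N \<le> j0" unfolding N_def by linarith
      with u show ?thesis by simp
    qed
    have nn: "0 \<le> (\<Sum>p\<leftarrow>P. min (fst p x) (hat j x))" for j
      using Pnn hat01 by (intro sum_list_nonneg) auto
    have "(1::real) / 2 ^ length (f # As) = (1 / 2 ^ length As) / 2" by simp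
    also have "\<dots> \<le> (\<Sum>p\<leftarrow>P. fst p x) / 2" using P2 by (simp add: divide_right_mono)
    also have "\<dots> = (\<Sum>p\<leftarrow>P. fst p x / 2)" by (simp add: sum_list_half)
    also have "\<dots> \<le> (\<Sum>p\<leftarrow>P. min (fst p x) (hat j0 x))"
    proof (intro sum_list_mono)
      fix p assume "p \<in> set P"
      from Pnn[OF this] hj0 show "fst p x / 2 \<le> min (fst p x) (hat j0 x)"
        unfolding min.bounded_iff by linarith
    qed
    also have "\<dots> \<le> (\<Sum>j\<in>{-N..N}. \<Sum>p\<leftarrow>P. min (fst p x) (hat j x))"
      using j0N nn by (intro member_le_sum) auto
    also have "\<dots> = (\<Sum>p\<leftarrow>P'. fst p x)" using sumP'[of "\<lambda>p. fst p x"] by simp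
    finally show "1 / 2 ^ length (f # As) \<le> (\<Sum>p\<leftarrow>P'. fst p x)" .
    define B where "B = {\<lceil>t\<rceil> - 2 .. \<lceil>t\<rceil> + 1}"
    have cardB: "card B = 4" unfolding B_def by simp
    have hh0: "j \<notin> B \<Longrightarrow> hh j x = 0" for j
    proof -
      assume "j \<notin> B"
      then have "j \<le> \<lceil>t\<rceil> - 3 \<or> \<lceil>t\<rceil> + 2 \<le> j" unfolding B_def by auto
      moreover have "of_int \<lceil>t\<rceil> < t + 1" "t \<le> of_int \<lceil>t\<rceil>" by linarith+
      ultimately have "2 \<le> \<bar>t - of_int j\<bar>" by (auto simp: abs_if) linarith+
      then show ?thesis unfolding hh_def t_def by simp
    qed
    have Tj: "(\<Sum>p\<leftarrow>P. min (snd p x) (hh j x)) \<le> (if j \<in> B then 4 ^ length As else 0)" for j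
    proof (cases "j \<in> B")
      case True
      have "(\<Sum>p\<leftarrow>P. min (snd p x) (hh j x)) \<le> (\<Sum>p\<leftarrow>P. snd p x)" by (intro sum_list_mono) auto
      then show ?thesis using True P2[rule_format, of x] by (simp del: sum_list_map_eq_sum_count)
    next
      case False
      have "(\<Sum>p\<leftarrow>P. min (snd p x) (hh j x)) = (\<Sum>p\<leftarrow>P. 0)"
        using hh0[OF False] Pnn by (intro arg_cong[where f=sum_list] map_cong) auto
      then show ?thesis using False by simp
    qed
    have "(\<Sum>p\<leftarrow>P'. snd p x) = (\<Sum>j\<in>{-N..N}. \<Sum>p\<leftarrow>P. min (snd p x) (hh j x))"
      using sumP'[of "\<lambda>p. snd p x"] by simp
    also have "\<dots> \<le> (\<Sum>j\<in>{-N..N}. if j \<in> B then 4 ^ length As else 0)"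
      by (intro sum_mono Tj)
    also have "\<dots> = (\<Sum>j\<in>{-N..N} \<inter> B. 4 ^ length As)" by (rule sum.inter_restrict[symmetric]) simp
    also have "\<dots> = real (card ({-N..N} \<inter> B)) * 4 ^ length As" by simp
    also have "\<dots> \<le> 4 * 4 ^ length As"
    proof -
      have "card ({-N..N} \<inter> B) \<le> card B" by (rule card_mono) (auto simp: B_def)
      then show ?thesis using cardB by (intro mult_right_mono) auto
    qed
    finally show "(\<Sum>p\<leftarrow>P'. snd p x) \<le> 4 ^ length (f # As)" by simp
  qed
  show ?case using part1 part2 by blast
qed

definition cell :: "('a \<Rightarrow> real) set \<Rightarrow> ('a \<Rightarrow> real) set \<Rightarrow> real \<Rightarrow> ('a \<Rightarrow> real) \<Rightarrow> ('a \<Rightarrow> real) \<Rightarrow> 'a \<Rightarrow> bool" where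
  "cell S A \<delta> a b x0 \<longleftrightarrow> cellok S a b \<and> (\<forall>x. 0 < a x \<longrightarrow> (\<forall>f\<in>A. \<bar>f x - f x0\<bar> \<le> \<delta>))"

locale tp =
  fixes E :: "('x::topological_space \<Rightarrow> real) set" and F :: "('y::topological_space \<Rightarrow> real) set"
    and \<phi> :: "('x \<Rightarrow> real) \<Rightarrow> ('y \<Rightarrow> real) \<Rightarrow> 'g::archimedean_riesz_space"
  assumes cX: "compact (UNIV :: 'x set)" and cY: "compact (UNIV :: 'y set)"
    and EC: "E \<subseteq> cfun" and rsE: "riesz_subspace_fun E" and cE: "\<And>c. (\<lambda>x. c) \<in> E"
    and FC: "F \<subseteq> cfun" and rsF: "riesz_subspace_fun F" and cF: "\<And>c. (\<lambda>y. c) \<in> F"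
    and bim: "riesz_bimorphism E F \<phi>"
begin

abbreviation u where "u \<equiv> \<phi> (\<lambda>x. 1) (\<lambda>y. 1)"

lemma lin1: "g \<in> F \<Longrightarrow> lin_on E (\<lambda>f. \<phi> f g)"
  using bim unfolding riesz_bimorphism_def bilinear_on_def lin_on_def by blast
lemma lin2: "f \<in> E \<Longrightarrow> lin_on F (\<lambda>g. \<phi> f g)"
  using bim unfolding riesz_bimorphism_def bilinear_on_def lin_on_def by blast
lemma hom1: "g \<in> F \<Longrightarrow> (\<And>y. 0 \<le> g y) \<Longrightarrow> riesz_hom_on E (\<lambda>f. \<phi> f g)"
  using bim unfolding riesz_bimorphism_def by blast
lemma hom2: "f \<in> E \<Longrightarrow> (\<And>x. 0 \<le> f x) \<Longrightarrow> riesz_hom_on F (\<lambda>g. \<phi> f g)"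
  using bim unfolding riesz_bimorphism_def by blast

lemma swap: "tp F E (\<lambda>g f. \<phi> f g)"
  unfolding tp_def using cX cY EC FC rsE rsF cE cF bim
  unfolding riesz_bimorphism_def bilinear_on_def by blast

lemma boundE: "f \<in> E \<Longrightarrow> \<exists>M\<ge>0. \<forall>x. \<bar>f x\<bar> \<le> M"
proof -
  assume "f \<in> E"
  then have "continuous_on UNIV f" using EC by (auto simp: cfun_def)
  then have "compact (f ` UNIV)" using cX by (rule compact_continuous_image)
  then have "bounded (f ` UNIV)" by (rule compact_imp_bounded)
  then obtain M where "\<forall>y\<in>f ` UNIV. norm y \<le> M" by (auto simp: bounded_iff)
  then have "\<forall>x. \<bar>f x\<bar> \<le> M" by auto
  then have "\<forall>x. \<bar>f x\<bar> \<le> max M 0" by (meson max.coboundedI1)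
  then show ?thesis by (intro exI[of _ "max M 0"]) auto
qed

lemma pos: "f \<in> E \<Longrightarrow> g \<in> F \<Longrightarrow> (\<And>x. 0 \<le> f x) \<Longrightarrow> (\<And>y. 0 \<le> g y) \<Longrightarrow> 0 \<le> \<phi> f g"
  using hom_pos[OF hom1 rsE] by blast

lemma mono1: "g \<in> F \<Longrightarrow> (\<And>y. 0 \<le> g y) \<Longrightarrow> f1 \<in> E \<Longrightarrow> f2 \<in> E \<Longrightarrow> (\<And>x. f1 x \<le> f2 x) \<Longrightarrow> \<phi> f1 g \<le> \<phi> f2 g"
  using hom_mono[OF hom1 rsE, of g f1 f2] by blast
lemma mono2: "f \<in> E \<Longrightarrow> (\<And>x. 0 \<le> f x) \<Longrightarrow> g1 \<in> F \<Longrightarrow> g2 \<in> F \<Longrightarrow> (\<And>y. g1 y \<le> g2 y) \<Longrightarrow> \<phi> f g1 \<le> \<phi> f g2"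
  using hom_mono[OF hom2 rsF, of f g1 g2] by blast

lemma upos: "0 \<le> u" by (rule pos) (auto intro: cE cF)

lemma const1: "g \<in> F \<Longrightarrow> \<phi> (\<lambda>x. c) g = c *\<^sub>R \<phi> (\<lambda>x. 1) g"
  using lin_scale[OF lin1 cE, of g c 1] by simp
lemma const2: "f \<in> E \<Longrightarrow> \<phi> f (\<lambda>y. c) = c *\<^sub>R \<phi> f (\<lambda>y. 1)"
  using lin_scale[OF lin2 cF, of f c 1] by simp

lemma abs_le: "f \<in> E \<Longrightarrow> g \<in> F \<Longrightarrow> absg (\<phi> f g) \<le> \<phi> (\<lambda>x. \<bar>f x\<bar>) (\<lambda>y. \<bar>g y\<bar>)"
proof -
  assume f: "f \<in> E" and g: "g \<in> F"
  define gp where "gp = (\<lambda>y. max (g y) 0)"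
  define gn where "gn = (\<lambda>y. max (- g y) 0)"
  have gpF: "gp \<in> F" unfolding gp_def by (intro rs_max rsF g cF)
  have gnF: "gn \<in> F" unfolding gn_def by (intro rs_max rs_uminus rsF g cF)
  have gpn: "0 \<le> gp y" "0 \<le> gn y" for y unfolding gp_def gn_def by auto
  have geq: "g = (\<lambda>y. gp y - gn y)" unfolding gp_def gn_def by (auto simp: fun_eq_iff)
  have aeq: "(\<lambda>y. \<bar>g y\<bar>) = (\<lambda>y. gp y + gn y)" unfolding gp_def gn_def by (auto simp: fun_eq_iff)
  have fa: "(\<lambda>x. \<bar>f x\<bar>) \<in> E" by (rule rs_abs[OF rsE f])
  have "\<phi> f g = \<phi> f gp - \<phi> f gn"
    using lin_diff[OF lin2[OF f] rsF gpF gnF] geq by simp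
  then have "absg (\<phi> f g) \<le> absg (\<phi> f gp) + absg (\<phi> f gn)"
    using absg_add[of "\<phi> f gp" "- \<phi> f gn"] absg_minus[of "\<phi> f gn"] by simp
  also have "\<dots> = \<phi> (\<lambda>x. \<bar>f x\<bar>) gp + \<phi> (\<lambda>x. \<bar>f x\<bar>) gn"
    using hom_abs[OF hom1[OF gpF] rsE f] hom_abs[OF hom1[OF gnF] rsE f] gpn by simp
  also have "\<dots> = \<phi> (\<lambda>x. \<bar>f x\<bar>) (\<lambda>y. \<bar>g y\<bar>)"
    using lin_add[OF lin2[OF fa] gpF gnF] aeq by simp
  finally show ?thesis .
qed

lemma bound: "f \<in> E \<Longrightarrow> g \<in> F \<Longrightarrow> \<forall>x. \<bar>f x\<bar> \<le> Mf \<Longrightarrow> \<forall>y. \<bar>g y\<bar> \<le> Mg \<Longrightarrow> 0 \<le> Mf \<Longrightarrow>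
  absg (\<phi> f g) \<le> (Mf * Mg) *\<^sub>R u"
proof -
  assume f: "f \<in> E" and g: "g \<in> F" and bf: "\<forall>x. \<bar>f x\<bar> \<le> Mf" and bg: "\<forall>y. \<bar>g y\<bar> \<le> Mg" and Mf: "0 \<le> Mf"
  have fa: "(\<lambda>x. \<bar>f x\<bar>) \<in> E" by (rule rs_abs[OF rsE f])
  have ga: "(\<lambda>y. \<bar>g y\<bar>) \<in> F" by (rule rs_abs[OF rsF g])
  have "absg (\<phi> f g) \<le> \<phi> (\<lambda>x. \<bar>f x\<bar>) (\<lambda>y. \<bar>g y\<bar>)" by (rule abs_le[OF f g])
  also have "\<dots> \<le> \<phi> (\<lambda>x. Mf) (\<lambda>y. \<bar>g y\<bar>)" by (rule mono1[OF ga _ fa cE]) (use bf in auto)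
  also have "\<dots> = Mf *\<^sub>R \<phi> (\<lambda>x. 1) (\<lambda>y. \<bar>g y\<bar>)" by (rule const1[OF ga])
  also have "\<dots> \<le> Mf *\<^sub>R \<phi> (\<lambda>x. 1) (\<lambda>y. Mg)"
    by (intro scaleR_left_mono Mf mono2[OF cE _ ga cF]) (use bg in auto)
  also have "\<dots> = (Mf * Mg) *\<^sub>R u" using const2[OF cE[of 1], of Mg] by simp
  finally show ?thesis .
qed

lemma loc_half:
  assumes f: "f \<in> E" and L: "0 \<le> L" and ca: "cellok E a a'" and cb: "cellok F b b'"
    and close: "\<forall>x. 0 < a x \<longrightarrow> \<bar>f x - c\<bar> \<le> \<delta>" and C: "0 \<le> C" and d: "0 \<le> \<delta>"
  shows "inf (L *\<^sub>R \<phi> (\<lambda>x. \<bar>f x - c\<bar>) (\<lambda>y. 1)) (C *\<^sub>R \<phi> a b) \<le> (L * \<delta>) *\<^sub>R \<phi> a' b'"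
proof -
  define k where "k = (\<lambda>x. \<bar>f x - c\<bar>)"
  have kE: "k \<in> E" unfolding k_def by (intro rs_abs rs_diff rsE f cE)
  have k0: "0 \<le> k x" for x unfolding k_def by simp
  obtain Mk where Mk: "0 \<le> Mk" "\<forall>x. \<bar>k x\<bar> \<le> Mk" using boundE[OF kE] by blast
  have aE: "a \<in> E" and a'E: "a' \<in> E" and a01: "\<And>x. 0 \<le> a x \<and> a x \<le> 1 \<and> 0 \<le> a' x \<and> a' x \<le> 1 \<and> (0 < a x \<longrightarrow> a' x = 1)"
    using ca unfolding cellok_def by auto
  have bF: "b \<in> F" and b'F: "b' \<in> F" and b01: "\<And>y. 0 \<le> b y \<and> b y \<le> 1 \<and> 0 \<le> b' y \<and> b' y \<le> 1 \<and> (0 < b y \<longrightarrow> b' y = 1)"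
    using cb unfolding cellok_def by auto
  define nb where "nb = (\<lambda>y. 1 - b' y)"
  have nbF: "nb \<in> F" unfolding nb_def by (intro rs_diff rsF cF b'F)
  have nb0: "0 \<le> nb y" for y unfolding nb_def using b01[of y] by simp
  have "(\<lambda>y. b' y + nb y) = (\<lambda>y. 1)" unfolding nb_def by simp
  then have split: "\<phi> k (\<lambda>y. 1) = \<phi> k b' + \<phi> k nb"
    using lin_add[OF lin2[OF kE] b'F nbF] by simp
  define X where "X = L *\<^sub>R \<phi> k b'"
  define Y where "Y = L *\<^sub>R \<phi> k nb"
  define W where "W = C *\<^sub>R \<phi> a b"
  have X0: "0 \<le> X" unfolding X_def using pos[OF kE b'F k0] b01 L by (simp add: scaleR_nonneg_nonneg)
  have Y0: "0 \<le> Y" unfolding Y_def using pos[OF kE nbF k0 nb0] L by (simp add: scaleR_nonneg_nonneg)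
  have ab0: "0 \<le> \<phi> a b" using pos[OF aE bF] a01 b01 by simp
  have W0: "0 \<le> W" unfolding W_def using ab0 C by (simp add: scaleR_nonneg_nonneg)
  have "L *\<^sub>R \<phi> k (\<lambda>y. 1) = X + Y" unfolding X_def Y_def split by (simp add: scaleR_right_distrib)
  then have "inf (L *\<^sub>R \<phi> k (\<lambda>y. 1)) W \<le> inf W X + inf W Y"
    using inf_add_le[OF W0 X0 Y0] by (simp add: inf_commute)
  also have "inf W Y \<le> 0"
  proof -
    have "\<phi> k nb \<le> \<phi> (\<lambda>x. Mk) nb" by (rule mono1[OF nbF nb0 kE cE]) (use Mk(2) in \<open>metis abs_le_D1\<close>)
    also have "\<dots> = Mk *\<^sub>R \<phi> (\<lambda>x. 1) nb" by (rule const1[OF nbF])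
    finally have Yle: "Y \<le> (L * Mk) *\<^sub>R \<phi> (\<lambda>x. 1) nb" unfolding Y_def using L
      by (metis scaleR_left_mono scaleR_scaleR)
    have "\<phi> a b \<le> \<phi> (\<lambda>x. 1) b" by (rule mono1[OF bF _ aE cE]) (use b01 a01 in auto)
    then have Wle: "W \<le> C *\<^sub>R \<phi> (\<lambda>x. 1) b" unfolding W_def using C by (rule scaleR_left_mono)
    have p1: "0 \<le> \<phi> (\<lambda>x. 1) nb" by (rule pos[OF cE nbF]) (use nb0 in auto)
    have p2: "0 \<le> \<phi> (\<lambda>x. 1) b" by (rule pos[OF cE bF]) (use b01 in auto)
    have "inf W Y \<le> inf (C *\<^sub>R \<phi> (\<lambda>x. 1) b) ((L * Mk) *\<^sub>R \<phi> (\<lambda>x. 1) nb)"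
      by (rule inf_mono[OF Wle Yle])
    also have "\<dots> \<le> max C (L * Mk) *\<^sub>R inf (\<phi> (\<lambda>x. 1) b) (\<phi> (\<lambda>x. 1) nb)"
      by (rule inf_scale_le[OF p2 p1 C]) (use L Mk in simp)
    also have "inf (\<phi> (\<lambda>x. 1) b) (\<phi> (\<lambda>x. 1) nb) = \<phi> (\<lambda>x. 1) (\<lambda>y. min (b y) (nb y))"
      using hom_min[OF hom2[OF cE] rsF bF nbF] by simp
    also have "(\<lambda>y. min (b y) (nb y)) = (\<lambda>y. 0)"
    proof
      fix y show "min (b y) (nb y) = 0" using b01[of y] nb0[of y] unfolding nb_def
        by (cases "0 < b y") auto
    qed
    also have "\<phi> (\<lambda>x. 1) (\<lambda>y. 0) = 0" by (rule lin_zero[OF lin2[OF cE] rsF])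
    finally show ?thesis by simp
  qed
  also have "inf W X \<le> (L * \<delta>) *\<^sub>R \<phi> a' b'"
  proof -
    have bb': "b y \<le> b' y" for y using b01[of y] by (cases "0 < b y") auto
    have "\<phi> a b \<le> \<phi> a b'" by (rule mono2[OF aE _ bF b'F bb']) (use a01 in auto)
    then have "W \<le> C *\<^sub>R \<phi> a b'" unfolding W_def using C by (rule scaleR_left_mono)
    then have "inf W X \<le> inf (C *\<^sub>R \<phi> a b') (L *\<^sub>R \<phi> k b')" unfolding X_def by (rule inf_mono) simp
    also have "\<dots> = inf (\<phi> (\<lambda>x. C * a x) b') (\<phi> (\<lambda>x. L * k x) b')"
      using lin_scale[OF lin1[OF b'F] aE] lin_scale[OF lin1[OF b'F] kE] by simp
    also have "\<dots> = \<phi> (\<lambda>x. min (C * a x) (L * k x)) b'"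
      using hom_min[OF hom1[OF b'F] rsE rs_scale[OF rsE aE] rs_scale[OF rsE kE]] b01 by simp
    also have "\<dots> \<le> \<phi> (\<lambda>x. (L * \<delta>) * a' x) b'"
    proof (rule mono1[OF b'F _ rs_min[OF rsE rs_scale[OF rsE aE] rs_scale[OF rsE kE]] rs_scale[OF rsE a'E]])
      show "0 \<le> b' y" for y using b01 by simp
      fix x show "min (C * a x) (L * k x) \<le> L * \<delta> * a' x"
      proof (cases "0 < a x")
        case True
        then have "k x \<le> \<delta>" "a' x = 1" using close a01 unfolding k_def by auto
        then show ?thesis using L by (simp add: min_le_iff_disj mult_left_mono)
      next
        case False
        then have "a x = 0" using a01[of x] by simp
        then show ?thesis using a01[of x] L d by (simp add: min_le_iff_disj)
      qed
    qed
    also have "\<dots> = (L * \<delta>) *\<^sub>R \<phi> a' b'" by (rule lin_scale[OF lin1[OF b'F] a'E])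
    finally show ?thesis .
  qed
  finally show ?thesis unfolding k_def W_def by simp
qed

end

context tp begin

lemma loc_leaf:
  assumes f: "f \<in> E" and g: "g \<in> F" and bf: "\<forall>x. \<bar>f x\<bar> \<le> Mf" and bg: "\<forall>y. \<bar>g y\<bar> \<le> Mg"
    and Mf: "0 \<le> Mf" and Mg: "0 \<le> Mg"
    and cx: "cell E {f} \<delta> a a' x0" and cy: "cell F {g} \<delta> b b' y0" and C: "0 \<le> C" and d: "0 \<le> \<delta>"
  shows "inf (absg (\<phi> f g - (f x0 * g y0) *\<^sub>R u)) (C *\<^sub>R \<phi> a b) \<le> ((Mg + Mf) * \<delta>) *\<^sub>R \<phi> a' b'"
proof -
  interpret sw: tp F E "\<lambda>g f. \<phi> f g" by (rule swap)
  define c where "c = f x0"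
  define e where "e = g y0"
  have ca: "cellok E a a'" and closex: "\<forall>x. 0 < a x \<longrightarrow> \<bar>f x - c\<bar> \<le> \<delta>"
    using cx unfolding cell_def c_def by auto
  have cb: "cellok F b b'" and closey: "\<forall>y. 0 < b y \<longrightarrow> \<bar>g y - e\<bar> \<le> \<delta>"
    using cy unfolding cell_def e_def by auto
  have aE: "a \<in> E" and a01: "\<And>x. 0 \<le> a x" using ca unfolding cellok_def by auto
  have bF: "b \<in> F" and b01: "\<And>y. 0 \<le> b y" using cb unfolding cellok_def by auto
  have fcE: "(\<lambda>x. f x - c) \<in> E" by (intro rs_diff rsE f cE)
  have gdF: "(\<lambda>y. g y - e) \<in> F" by (intro rs_diff rsF g cF)
  have fcaE: "(\<lambda>x. \<bar>f x - c\<bar>) \<in> E" by (intro rs_abs rs_diff rsE f cE)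
  have gdaF: "(\<lambda>y. \<bar>g y - e\<bar>) \<in> F" by (intro rs_abs rs_diff rsF g cF)
  have e1: "\<phi> (\<lambda>x. f x - c) g = \<phi> f g - c *\<^sub>R \<phi> (\<lambda>x. 1) g"
    using lin_diff[OF lin1[OF g] rsE f cE] const1[OF g, of c] by simp
  have e2: "\<phi> (\<lambda>x. 1) (\<lambda>y. g y - e) = \<phi> (\<lambda>x. 1) g - e *\<^sub>R u"
    using lin_diff[OF lin2[OF cE] rsF g cF] const2[OF cE[of 1], of e] by simp
  have eq: "\<phi> f g - (c * e) *\<^sub>R u = \<phi> (\<lambda>x. f x - c) g + c *\<^sub>R \<phi> (\<lambda>x. 1) (\<lambda>y. g y - e)"
    unfolding e1 e2 by (simp add: algebra_simps)
  define X where "X = Mg *\<^sub>R \<phi> (\<lambda>x. \<bar>f x - c\<bar>) (\<lambda>y. 1)"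
  define Y where "Y = Mf *\<^sub>R \<phi> (\<lambda>x. 1) (\<lambda>y. \<bar>g y - e\<bar>)"
  define W where "W = C *\<^sub>R \<phi> a b"
  have X0: "0 \<le> X" unfolding X_def using Mg by (intro scaleR_nonneg_nonneg pos fcaE cF) auto
  have Y0: "0 \<le> Y" unfolding Y_def using Mf by (intro scaleR_nonneg_nonneg pos gdaF cE) auto
  have W0: "0 \<le> W" unfolding W_def using C a01 b01 by (intro scaleR_nonneg_nonneg pos aE bF) auto
  have "absg (\<phi> f g - (c * e) *\<^sub>R u) \<le> absg (\<phi> (\<lambda>x. f x - c) g) + absg (c *\<^sub>R \<phi> (\<lambda>x. 1) (\<lambda>y. g y - e))"
    unfolding eq by (rule absg_add)
  also have "\<dots> \<le> X + Y"
  proof (rule add_mono)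
    have "absg (\<phi> (\<lambda>x. f x - c) g) \<le> \<phi> (\<lambda>x. \<bar>f x - c\<bar>) (\<lambda>y. \<bar>g y\<bar>)" by (rule abs_le[OF fcE g])
    also have "\<dots> \<le> \<phi> (\<lambda>x. \<bar>f x - c\<bar>) (\<lambda>y. Mg)"
      by (rule mono2[OF fcaE _ rs_abs[OF rsF g] cF]) (use bg in auto)
    also have "\<dots> = X" unfolding X_def by (rule const2[OF fcaE])
    finally show "absg (\<phi> (\<lambda>x. f x - c) g) \<le> X" .
    have "absg (\<phi> (\<lambda>x. 1) (\<lambda>y. g y - e)) \<le> \<phi> (\<lambda>x. \<bar>1::real\<bar>) (\<lambda>y. \<bar>g y - e\<bar>)" by (rule abs_le[OF cE gdF])
    then have A1: "absg (\<phi> (\<lambda>x. 1) (\<lambda>y. g y - e)) \<le> \<phi> (\<lambda>x. 1) (\<lambda>y. \<bar>g y - e\<bar>)" by simp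
    have A0: "0 \<le> \<phi> (\<lambda>x. 1) (\<lambda>y. \<bar>g y - e\<bar>)" by (intro pos gdaF cE) auto
    have cM: "\<bar>c\<bar> \<le> Mf" using bf unfolding c_def by simp
    have "absg (c *\<^sub>R \<phi> (\<lambda>x. 1) (\<lambda>y. g y - e)) = \<bar>c\<bar> *\<^sub>R absg (\<phi> (\<lambda>x. 1) (\<lambda>y. g y - e))"
      by (rule absg_scaleR)
    also have "\<dots> \<le> \<bar>c\<bar> *\<^sub>R \<phi> (\<lambda>x. 1) (\<lambda>y. \<bar>g y - e\<bar>)" by (rule scaleR_left_mono[OF A1]) simp
    also have "\<dots> \<le> Y" unfolding Y_def by (rule scaleR_right_mono[OF cM A0])
    finally show "absg (c *\<^sub>R \<phi> (\<lambda>x. 1) (\<lambda>y. g y - e)) \<le> Y" .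
  qed
  finally have le1: "absg (\<phi> f g - (c * e) *\<^sub>R u) \<le> X + Y" .
  have "inf (absg (\<phi> f g - (c * e) *\<^sub>R u)) W \<le> inf W (X + Y)"
    using le1 by (simp add: inf_commute inf.coboundedI2 le_infI1)
  also have "\<dots> \<le> inf W X + inf W Y" by (rule inf_add_le[OF W0 X0 Y0])
  also have "\<dots> \<le> (Mg * \<delta>) *\<^sub>R \<phi> a' b' + (Mf * \<delta>) *\<^sub>R \<phi> a' b'"
  proof (rule add_mono)
    show "inf W X \<le> (Mg * \<delta>) *\<^sub>R \<phi> a' b'"
      using loc_half[OF f Mg ca cb closex C d] by (simp add: inf_commute X_def W_def)
    show "inf W Y \<le> (Mf * \<delta>) *\<^sub>R \<phi> a' b'"
      using sw.loc_half[OF g Mf cb ca closey C d] by (simp add: inf_commute Y_def W_def)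
  qed
  also have "\<dots> = ((Mg + Mf) * \<delta>) *\<^sub>R \<phi> a' b'" by (simp add: algebra_simps)
  finally show ?thesis unfolding W_def c_def e_def .
qed

end

lemma cell_mono: "cell S A \<delta> a b x0 \<Longrightarrow> A' \<subseteq> A \<Longrightarrow> cell S A' \<delta> a b x0"
  unfolding cell_def by blast

lemma cell_pos: "cell S A \<delta> a b x0 \<Longrightarrow> b \<in> S \<and> (\<forall>x. 0 \<le> b x) \<and> a \<in> S \<and> (\<forall>x. 0 \<le> a x)"
  unfolding cell_def cellok_def by blast

lemma max_diff_abs: "\<bar>max (a::real) b - max c d\<bar> \<le> \<bar>a - c\<bar> + \<bar>b - d\<bar>"
  by (auto simp: max_def abs_if)

context tp begin

lemma boundF: "g \<in> F \<Longrightarrow> \<exists>M\<ge>0. \<forall>y. \<bar>g y\<bar> \<le> M"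
  using tp.boundE[OF swap] by blast

inductive_set R :: "(('x \<times> 'y \<Rightarrow> real) \<times> 'g) set" where
  gen: "f \<in> E \<Longrightarrow> g \<in> F \<Longrightarrow> (chi f g, \<phi> f g) \<in> R"
| add: "(h1, z1) \<in> R \<Longrightarrow> (h2, z2) \<in> R \<Longrightarrow> ((\<lambda>p. h1 p + h2 p), z1 + z2) \<in> R"
| scl: "(h, z) \<in> R \<Longrightarrow> ((\<lambda>p. c * h p), c *\<^sub>R z) \<in> R"
| mx: "(h1, z1) \<in> R \<Longrightarrow> (h2, z2) \<in> R \<Longrightarrow> ((\<lambda>p. max (h1 p) (h2 p)), sup z1 z2) \<in> R"

definition Inv :: "('x \<times> 'y \<Rightarrow> real) \<Rightarrow> 'g \<Rightarrow> bool" where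
  "Inv h z \<longleftrightarrow> (\<exists>A B K. finite A \<and> A \<subseteq> E \<and> finite B \<and> B \<subseteq> F \<and> 0 \<le> K \<and> absg z \<le> K *\<^sub>R u \<and>
     (\<forall>\<delta> x x' y y'. 0 \<le> \<delta> \<longrightarrow> (\<forall>f\<in>A. \<bar>f x - f x'\<bar> \<le> \<delta>) \<longrightarrow> (\<forall>g\<in>B. \<bar>g y - g y'\<bar> \<le> \<delta>) \<longrightarrow>
        \<bar>h (x, y) - h (x', y')\<bar> \<le> K * \<delta>) \<and>
     (\<forall>\<delta> a a' x0 b b' y0 C. 0 \<le> \<delta> \<longrightarrow> cell E A \<delta> a a' x0 \<longrightarrow> cell F B \<delta> b b' y0 \<longrightarrow> 0 \<le> C \<longrightarrow>
        inf (absg (z - h (x0, y0) *\<^sub>R u)) (C *\<^sub>R \<phi> a b) \<le> (K * \<delta>) *\<^sub>R \<phi> a' b'))"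


lemma InvE:
  assumes "Inv h z"
  obtains A B K where "finite A" "A \<subseteq> E" "finite B" "B \<subseteq> F" "0 \<le> K" "absg z \<le> K *\<^sub>R u"
     "\<And>\<delta> x x' y y'. 0 \<le> \<delta> \<Longrightarrow> (\<forall>f\<in>A. \<bar>f x - f x'\<bar> \<le> \<delta>) \<Longrightarrow> (\<forall>g\<in>B. \<bar>g y - g y'\<bar> \<le> \<delta>) \<Longrightarrow>
        \<bar>h (x, y) - h (x', y')\<bar> \<le> K * \<delta>"
     "\<And>\<delta> a a' x0 b b' y0 C. 0 \<le> \<delta> \<Longrightarrow> cell E A \<delta> a a' x0 \<Longrightarrow> cell F B \<delta> b b' y0 \<Longrightarrow> 0 \<le> C \<Longrightarrow>
        inf (absg (z - h (x0, y0) *\<^sub>R u)) (C *\<^sub>R \<phi> a b) \<le> (K * \<delta>) *\<^sub>R \<phi> a' b'"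
proof -
  from assms obtain A B K where H: "finite A" "A \<subseteq> E" "finite B" "B \<subseteq> F" "0 \<le> K" "absg z \<le> K *\<^sub>R u"
     "\<forall>\<delta> x x' y y'. 0 \<le> \<delta> \<longrightarrow> (\<forall>f\<in>A. \<bar>f x - f x'\<bar> \<le> \<delta>) \<longrightarrow> (\<forall>g\<in>B. \<bar>g y - g y'\<bar> \<le> \<delta>) \<longrightarrow>
        \<bar>h (x, y) - h (x', y')\<bar> \<le> K * \<delta>"
     "\<forall>\<delta> a a' x0 b b' y0 C. 0 \<le> \<delta> \<longrightarrow> cell E A \<delta> a a' x0 \<longrightarrow> cell F B \<delta> b b' y0 \<longrightarrow> 0 \<le> C \<longrightarrow>
        inf (absg (z - h (x0, y0) *\<^sub>R u)) (C *\<^sub>R \<phi> a b) \<le> (K * \<delta>) *\<^sub>R \<phi> a' b'"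
    unfolding Inv_def by (elim exE conjE) (rule that)
  show ?thesis
    apply (rule that[OF H(1-6)])
    using H(7) apply blast
    using H(8) apply blast
    done
qed

lemma InvI:
  assumes "finite A" "A \<subseteq> E" "finite B" "B \<subseteq> F" "0 \<le> K" "absg z \<le> K *\<^sub>R u"
     "\<And>\<delta> x x' y y'. 0 \<le> \<delta> \<Longrightarrow> (\<forall>f\<in>A. \<bar>f x - f x'\<bar> \<le> \<delta>) \<Longrightarrow> (\<forall>g\<in>B. \<bar>g y - g y'\<bar> \<le> \<delta>) \<Longrightarrow>
        \<bar>h (x, y) - h (x', y')\<bar> \<le> K * \<delta>"
     "\<And>\<delta> a a' x0 b b' y0 C. 0 \<le> \<delta> \<Longrightarrow> cell E A \<delta> a a' x0 \<Longrightarrow> cell F B \<delta> b b' y0 \<Longrightarrow> 0 \<le> C \<Longrightarrow>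
        inf (absg (z - h (x0, y0) *\<^sub>R u)) (C *\<^sub>R \<phi> a b) \<le> (K * \<delta>) *\<^sub>R \<phi> a' b'"
  shows "Inv h z"
  unfolding Inv_def
  apply (rule exI[of _ A], rule exI[of _ B], rule exI[of _ K])
  apply (intro conjI assms(1-6) allI impI)
   apply (rule assms(7); assumption)
  apply (rule assms(8); assumption)
  done

lemma wpos: "cell E A \<delta> a a' x0 \<Longrightarrow> cell F B \<delta> b b' y0 \<Longrightarrow> 0 \<le> \<phi> a b \<and> 0 \<le> \<phi> a' b'"
  using cell_pos[of E A \<delta> a a' x0] cell_pos[of F B \<delta> b b' y0] by (auto intro!: pos)

lemma max_scaleR_u: "max s t *\<^sub>R u = sup (s *\<^sub>R u) (t *\<^sub>R u)"
proof (cases "s \<le> t")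
  case True
  then have "s *\<^sub>R u \<le> t *\<^sub>R u" using upos by (rule scaleR_right_mono)
  then show ?thesis using True by (simp add: sup_absorb2)
next
  case False
  then have "t *\<^sub>R u \<le> s *\<^sub>R u" using upos by (intro scaleR_right_mono) auto
  then show ?thesis using False by (simp add: sup_absorb1)
qed

lemma Inv_gen: "f \<in> E \<Longrightarrow> g \<in> F \<Longrightarrow> Inv (chi f g) (\<phi> f g)"
proof -
  assume f: "f \<in> E" and g: "g \<in> F"
  obtain Mf where Mf: "0 \<le> Mf" "\<forall>x. \<bar>f x\<bar> \<le> Mf" using boundE[OF f] by blast
  obtain Mg where Mg: "0 \<le> Mg" "\<forall>y. \<bar>g y\<bar> \<le> Mg" using boundF[OF g] by blast
  define K where "K = Mf * Mg + Mf + Mg"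
  have K0: "0 \<le> K" unfolding K_def using Mf Mg by simp
  have KM: "Mg + Mf \<le> K" unfolding K_def using Mf Mg by simp
  have P1: "absg (\<phi> f g) \<le> K *\<^sub>R u"
  proof -
    have "absg (\<phi> f g) \<le> (Mf * Mg) *\<^sub>R u" by (rule bound[OF f g Mf(2) Mg(2) Mf(1)])
    also have "\<dots> \<le> K *\<^sub>R u" by (rule scaleR_right_mono[OF _ upos]) (simp add: K_def Mf Mg)
    finally show ?thesis .
  qed
  have P2: "\<bar>chi f g (x, y) - chi f g (x', y')\<bar> \<le> K * \<delta>"
    if d: "0 \<le> \<delta>" and hx: "\<forall>f'\<in>{f}. \<bar>f' x - f' x'\<bar> \<le> \<delta>" and hy: "\<forall>g'\<in>{g}. \<bar>g' y - g' y'\<bar> \<le> \<delta>"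
    for \<delta> x x' y y'
  proof -
    have hx': "\<bar>f x - f x'\<bar> \<le> \<delta>" and hy': "\<bar>g y - g y'\<bar> \<le> \<delta>" using hx hy by auto
    have "f x * g y - f x' * g y' = (f x - f x') * g y + f x' * (g y - g y')" by (simp add: algebra_simps)
    then have "\<bar>f x * g y - f x' * g y'\<bar> \<le> \<bar>f x - f x'\<bar> * \<bar>g y\<bar> + \<bar>f x'\<bar> * \<bar>g y - g y'\<bar>"
      by (metis abs_mult abs_triangle_ineq)
    also have "\<dots> \<le> \<delta> * Mg + Mf * \<delta>"
      using hx' hy' Mf Mg d by (intro add_mono mult_mono) auto
    also have "\<dots> = (Mg + Mf) * \<delta>" by (simp add: algebra_simps)
    also have "\<dots> \<le> K * \<delta>" using KM d by (rule mult_right_mono)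
    finally show ?thesis by (simp add: chi_def)
  qed
  have P3: "inf (absg (\<phi> f g - chi f g (x0, y0) *\<^sub>R u)) (C *\<^sub>R \<phi> a b) \<le> (K * \<delta>) *\<^sub>R \<phi> a' b'"
    if d: "0 \<le> \<delta>" and cx: "cell E {f} \<delta> a a' x0" and cy: "cell F {g} \<delta> b b' y0" and C: "0 \<le> C"
    for \<delta> a a' x0 b b' y0 C
  proof -
    have "inf (absg (\<phi> f g - (f x0 * g y0) *\<^sub>R u)) (C *\<^sub>R \<phi> a b) \<le> ((Mg + Mf) * \<delta>) *\<^sub>R \<phi> a' b'"
      by (rule loc_leaf[OF f g Mf(2) Mg(2) Mf(1) Mg(1) cx cy C d])
    also have "\<dots> \<le> (K * \<delta>) *\<^sub>R \<phi> a' b'"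
      using wpos[OF cx cy] KM d by (intro scaleR_right_mono mult_right_mono) auto
    finally show ?thesis by (simp add: chi_def)
  qed
  show ?thesis
    by (rule InvI[of "{f}" "{g}" K]) (use f g K0 P1 P2 P3 in auto)
qed

lemma Inv_add: "Inv h1 z1 \<Longrightarrow> Inv h2 z2 \<Longrightarrow> Inv (\<lambda>p. h1 p + h2 p) (z1 + z2)"
proof -
  assume i1: "Inv h1 z1" and i2: "Inv h2 z2"
  obtain A1 B1 K1 where
    I1: "finite A1" "A1 \<subseteq> E" "finite B1" "B1 \<subseteq> F" "0 \<le> K1" "absg z1 \<le> K1 *\<^sub>R u"
     "\<And>\<delta> x x' y y'. 0 \<le> \<delta> \<Longrightarrow> (\<forall>f\<in>A1. \<bar>f x - f x'\<bar> \<le> \<delta>) \<Longrightarrow> (\<forall>g\<in>B1. \<bar>g y - g y'\<bar> \<le> \<delta>) \<Longrightarrow>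
        \<bar>h1 (x, y) - h1 (x', y')\<bar> \<le> K1 * \<delta>"
     "\<And>\<delta> a a' x0 b b' y0 C. 0 \<le> \<delta> \<Longrightarrow> cell E A1 \<delta> a a' x0 \<Longrightarrow> cell F B1 \<delta> b b' y0 \<Longrightarrow> 0 \<le> C \<Longrightarrow>
        inf (absg (z1 - h1 (x0, y0) *\<^sub>R u)) (C *\<^sub>R \<phi> a b) \<le> (K1 * \<delta>) *\<^sub>R \<phi> a' b'"
    by (rule InvE[OF i1], blast?)
  obtain A2 B2 K2 where
    I2: "finite A2" "A2 \<subseteq> E" "finite B2" "B2 \<subseteq> F" "0 \<le> K2" "absg z2 \<le> K2 *\<^sub>R u"
     "\<And>\<delta> x x' y y'. 0 \<le> \<delta> \<Longrightarrow> (\<forall>f\<in>A2. \<bar>f x - f x'\<bar> \<le> \<delta>) \<Longrightarrow> (\<forall>g\<in>B2. \<bar>g y - g y'\<bar> \<le> \<delta>) \<Longrightarrow>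
        \<bar>h2 (x, y) - h2 (x', y')\<bar> \<le> K2 * \<delta>"
     "\<And>\<delta> a a' x0 b b' y0 C. 0 \<le> \<delta> \<Longrightarrow> cell E A2 \<delta> a a' x0 \<Longrightarrow> cell F B2 \<delta> b b' y0 \<Longrightarrow> 0 \<le> C \<Longrightarrow>
        inf (absg (z2 - h2 (x0, y0) *\<^sub>R u)) (C *\<^sub>R \<phi> a b) \<le> (K2 * \<delta>) *\<^sub>R \<phi> a' b'"
    by (rule InvE[OF i2], blast?)
  have P1: "absg (z1 + z2) \<le> (K1 + K2) *\<^sub>R u"
    using absg_add[of z1 z2] add_mono[OF I1(6) I2(6)] by (simp add: scaleR_left_distrib)
  have P2: "\<bar>(h1 (x, y) + h2 (x, y)) - (h1 (x', y') + h2 (x', y'))\<bar> \<le> (K1 + K2) * \<delta>"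
    if "0 \<le> \<delta>" "\<forall>f\<in>A1 \<union> A2. \<bar>f x - f x'\<bar> \<le> \<delta>" "\<forall>g\<in>B1 \<union> B2. \<bar>g y - g y'\<bar> \<le> \<delta>" for \<delta> x x' y y'
  proof -
    have "\<bar>h1 (x, y) - h1 (x', y')\<bar> \<le> K1 * \<delta>" "\<bar>h2 (x, y) - h2 (x', y')\<bar> \<le> K2 * \<delta>"
      using that by (auto intro!: I1(7) I2(7))
    then show ?thesis
      using abs_triangle_ineq[of "h1 (x,y) - h1 (x',y')" "h2 (x,y) - h2 (x',y')"] by (simp add: algebra_simps)
  qed
  have P3: "inf (absg ((z1 + z2) - (h1 (x0, y0) + h2 (x0, y0)) *\<^sub>R u)) (C *\<^sub>R \<phi> a b) \<le> ((K1 + K2) * \<delta>) *\<^sub>R \<phi> a' b'"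
    if d: "0 \<le> \<delta>" and cx: "cell E (A1 \<union> A2) \<delta> a a' x0" and cy: "cell F (B1 \<union> B2) \<delta> b b' y0" and C: "0 \<le> C"
    for \<delta> a a' x0 b b' y0 C
  proof -
    let ?m1 = "absg (z1 - h1 (x0, y0) *\<^sub>R u)" and ?m2 = "absg (z2 - h2 (x0, y0) *\<^sub>R u)"
    let ?W = "C *\<^sub>R \<phi> a b"
    have W0: "0 \<le> ?W" using wpos[OF cx cy] C by (simp add: scaleR_nonneg_nonneg)
    have "(z1 + z2) - (h1 (x0, y0) + h2 (x0, y0)) *\<^sub>R u = (z1 - h1 (x0, y0) *\<^sub>R u) + (z2 - h2 (x0, y0) *\<^sub>R u)"
      by (simp add: algebra_simps)
    then have "absg ((z1 + z2) - (h1 (x0, y0) + h2 (x0, y0)) *\<^sub>R u) \<le> ?m1 + ?m2"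
      by (simp only: absg_add)
    then have "inf ?W (absg ((z1 + z2) - (h1 (x0, y0) + h2 (x0, y0)) *\<^sub>R u)) \<le> inf ?W (?m1 + ?m2)"
      by (rule inf_mono[OF order_refl])
    then have "inf (absg ((z1 + z2) - (h1 (x0, y0) + h2 (x0, y0)) *\<^sub>R u)) ?W \<le> inf ?W (?m1 + ?m2)"
      by (simp only: inf_commute)
    also have "\<dots> \<le> inf ?W ?m1 + inf ?W ?m2" by (rule inf_add_le[OF W0 absg_nonneg absg_nonneg])
    also have "\<dots> \<le> (K1 * \<delta>) *\<^sub>R \<phi> a' b' + (K2 * \<delta>) *\<^sub>R \<phi> a' b'"
      using I1(8)[OF d cell_mono[OF cx] cell_mono[OF cy] C] I2(8)[OF d cell_mono[OF cx] cell_mono[OF cy] C]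
      by (intro add_mono) (auto simp: inf_commute)
    also have "\<dots> = ((K1 + K2) * \<delta>) *\<^sub>R \<phi> a' b'" by (simp add: algebra_simps)
    finally show ?thesis .
  qed
  show ?thesis
    by (rule InvI[of "A1 \<union> A2" "B1 \<union> B2" "K1 + K2"]) (use I1(1-5) I2(1-5) P1 P2 P3 in auto)
qed

end

lemma inf_two: "0 \<le> (W::'g::riesz_space) \<Longrightarrow> 0 \<le> m1 \<Longrightarrow> 0 \<le> m2 \<Longrightarrow> m \<le> m1 + m2 \<Longrightarrow>
  inf m W \<le> inf m1 W + inf m2 W"
proof -
  assume W0: "0 \<le> W" and m1: "0 \<le> m1" and m2: "0 \<le> m2" and m: "m \<le> m1 + m2"
  have "inf W m \<le> inf W (m1 + m2)" by (rule inf_mono[OF order_refl m])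
  also have "\<dots> \<le> inf W m1 + inf W m2" by (rule inf_add_le[OF W0 m1 m2])
  finally show ?thesis by (simp only: inf_commute)
qed

context tp begin

lemma Inv_scl: "Inv h z \<Longrightarrow> Inv (\<lambda>p. c * h p) (c *\<^sub>R z)"
proof -
  assume i: "Inv h z"
  obtain A B K where I: "finite A" "A \<subseteq> E" "finite B" "B \<subseteq> F" "0 \<le> K" "absg z \<le> K *\<^sub>R u"
     "\<And>\<delta> x x' y y'. 0 \<le> \<delta> \<Longrightarrow> (\<forall>f\<in>A. \<bar>f x - f x'\<bar> \<le> \<delta>) \<Longrightarrow> (\<forall>g\<in>B. \<bar>g y - g y'\<bar> \<le> \<delta>) \<Longrightarrow>
        \<bar>h (x, y) - h (x', y')\<bar> \<le> K * \<delta>"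
     "\<And>\<delta> a a' x0 b b' y0 C. 0 \<le> \<delta> \<Longrightarrow> cell E A \<delta> a a' x0 \<Longrightarrow> cell F B \<delta> b b' y0 \<Longrightarrow> 0 \<le> C \<Longrightarrow>
        inf (absg (z - h (x0, y0) *\<^sub>R u)) (C *\<^sub>R \<phi> a b) \<le> (K * \<delta>) *\<^sub>R \<phi> a' b'"
    by (rule InvE[OF i], blast?)
  have P1: "absg (c *\<^sub>R z) \<le> (\<bar>c\<bar> * K) *\<^sub>R u"
    using scaleR_left_mono[OF I(6), of "\<bar>c\<bar>"] by (simp add: absg_scaleR)
  have P2: "\<bar>c * h (x, y) - c * h (x', y')\<bar> \<le> (\<bar>c\<bar> * K) * \<delta>"
    if "0 \<le> \<delta>" "\<forall>f\<in>A. \<bar>f x - f x'\<bar> \<le> \<delta>" "\<forall>g\<in>B. \<bar>g y - g y'\<bar> \<le> \<delta>" for \<delta> x x' y y'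
  proof -
    have "\<bar>c * h (x, y) - c * h (x', y')\<bar> = \<bar>c\<bar> * \<bar>h (x, y) - h (x', y')\<bar>"
      by (simp add: abs_mult[symmetric] algebra_simps)
    also have "\<dots> \<le> \<bar>c\<bar> * (K * \<delta>)" using I(7)[OF that] by (intro mult_left_mono) auto
    finally show ?thesis by simp
  qed
  have P3: "inf (absg (c *\<^sub>R z - (c * h (x0, y0)) *\<^sub>R u)) (C *\<^sub>R \<phi> a b) \<le> ((\<bar>c\<bar> * K) * \<delta>) *\<^sub>R \<phi> a' b'"
    if d: "0 \<le> \<delta>" and cx: "cell E A \<delta> a a' x0" and cy: "cell F B \<delta> b b' y0" and C: "0 \<le> C"
    for \<delta> a a' x0 b b' y0 C
  proof (cases "c = 0")
    case True
    then show ?thesis by simp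
  next
    case False
    then have cp: "0 < \<bar>c\<bar>" by simp
    have C': "0 \<le> C / \<bar>c\<bar>" using C cp by simp
    have "c *\<^sub>R z - (c * h (x0, y0)) *\<^sub>R u = c *\<^sub>R (z - h (x0, y0) *\<^sub>R u)" by (simp add: algebra_simps)
    then have "absg (c *\<^sub>R z - (c * h (x0, y0)) *\<^sub>R u) = \<bar>c\<bar> *\<^sub>R absg (z - h (x0, y0) *\<^sub>R u)"
      by (simp only: absg_scaleR)
    moreover have "C *\<^sub>R \<phi> a b = \<bar>c\<bar> *\<^sub>R ((C / \<bar>c\<bar>) *\<^sub>R \<phi> a b)" using cp by simp
    ultimately have "inf (absg (c *\<^sub>R z - (c * h (x0, y0)) *\<^sub>R u)) (C *\<^sub>R \<phi> a b)
       = \<bar>c\<bar> *\<^sub>R inf (absg (z - h (x0, y0) *\<^sub>R u)) ((C / \<bar>c\<bar>) *\<^sub>R \<phi> a b)"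
      by (simp only: scaleR_inf[OF abs_ge_zero])
    also have "\<dots> \<le> \<bar>c\<bar> *\<^sub>R ((K * \<delta>) *\<^sub>R \<phi> a' b')"
      by (rule scaleR_left_mono[OF I(8)[OF d cx cy C']]) simp
    finally show ?thesis by (simp add: mult.assoc)
  qed
  show ?thesis
    by (rule InvI[of A B "\<bar>c\<bar> * K"]) (use I(1-5) P1 P2 P3 in auto)
qed

lemma Inv_mx: "Inv h1 z1 \<Longrightarrow> Inv h2 z2 \<Longrightarrow> Inv (\<lambda>p. max (h1 p) (h2 p)) (sup z1 z2)"
proof -
  assume i1: "Inv h1 z1" and i2: "Inv h2 z2"
  obtain A1 B1 K1 where
    I1: "finite A1" "A1 \<subseteq> E" "finite B1" "B1 \<subseteq> F" "0 \<le> K1" "absg z1 \<le> K1 *\<^sub>R u"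
     "\<And>\<delta> x x' y y'. 0 \<le> \<delta> \<Longrightarrow> (\<forall>f\<in>A1. \<bar>f x - f x'\<bar> \<le> \<delta>) \<Longrightarrow> (\<forall>g\<in>B1. \<bar>g y - g y'\<bar> \<le> \<delta>) \<Longrightarrow>
        \<bar>h1 (x, y) - h1 (x', y')\<bar> \<le> K1 * \<delta>"
     "\<And>\<delta> a a' x0 b b' y0 C. 0 \<le> \<delta> \<Longrightarrow> cell E A1 \<delta> a a' x0 \<Longrightarrow> cell F B1 \<delta> b b' y0 \<Longrightarrow> 0 \<le> C \<Longrightarrow>
        inf (absg (z1 - h1 (x0, y0) *\<^sub>R u)) (C *\<^sub>R \<phi> a b) \<le> (K1 * \<delta>) *\<^sub>R \<phi> a' b'"
    by (rule InvE[OF i1], blast?)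
  obtain A2 B2 K2 where
    I2: "finite A2" "A2 \<subseteq> E" "finite B2" "B2 \<subseteq> F" "0 \<le> K2" "absg z2 \<le> K2 *\<^sub>R u"
     "\<And>\<delta> x x' y y'. 0 \<le> \<delta> \<Longrightarrow> (\<forall>f\<in>A2. \<bar>f x - f x'\<bar> \<le> \<delta>) \<Longrightarrow> (\<forall>g\<in>B2. \<bar>g y - g y'\<bar> \<le> \<delta>) \<Longrightarrow>
        \<bar>h2 (x, y) - h2 (x', y')\<bar> \<le> K2 * \<delta>"
     "\<And>\<delta> a a' x0 b b' y0 C. 0 \<le> \<delta> \<Longrightarrow> cell E A2 \<delta> a a' x0 \<Longrightarrow> cell F B2 \<delta> b b' y0 \<Longrightarrow> 0 \<le> C \<Longrightarrow>
        inf (absg (z2 - h2 (x0, y0) *\<^sub>R u)) (C *\<^sub>R \<phi> a b) \<le> (K2 * \<delta>) *\<^sub>R \<phi> a' b'"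
    by (rule InvE[OF i2], blast?)
  have P1: "absg (sup z1 z2) \<le> (K1 + K2) *\<^sub>R u"
  proof -
    have "absg (sup z1 z2 - sup 0 0) \<le> absg (z1 - 0) + absg (z2 - 0)" by (rule absg_sup_diff)
    then have "absg (sup z1 z2) \<le> absg z1 + absg z2" by simp
    also have "\<dots> \<le> K1 *\<^sub>R u + K2 *\<^sub>R u" by (rule add_mono[OF I1(6) I2(6)])
    finally show ?thesis by (simp add: scaleR_left_distrib)
  qed
  have P2: "\<bar>max (h1 (x, y)) (h2 (x, y)) - max (h1 (x', y')) (h2 (x', y'))\<bar> \<le> (K1 + K2) * \<delta>"
    if "0 \<le> \<delta>" "\<forall>f\<in>A1 \<union> A2. \<bar>f x - f x'\<bar> \<le> \<delta>" "\<forall>g\<in>B1 \<union> B2. \<bar>g y - g y'\<bar> \<le> \<delta>" for \<delta> x x' y y'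
  proof -
    have "\<bar>h1 (x, y) - h1 (x', y')\<bar> \<le> K1 * \<delta>" "\<bar>h2 (x, y) - h2 (x', y')\<bar> \<le> K2 * \<delta>"
      using that by (auto intro!: I1(7) I2(7))
    then show ?thesis
      using max_diff_abs[of "h1 (x,y)" "h2 (x,y)" "h1 (x',y')" "h2 (x',y')"] by (simp add: algebra_simps)
  qed
  have P3: "inf (absg (sup z1 z2 - (max (h1 (x0, y0)) (h2 (x0, y0))) *\<^sub>R u)) (C *\<^sub>R \<phi> a b) \<le> ((K1 + K2) * \<delta>) *\<^sub>R \<phi> a' b'"
    if d: "0 \<le> \<delta>" and cx: "cell E (A1 \<union> A2) \<delta> a a' x0" and cy: "cell F (B1 \<union> B2) \<delta> b b' y0" and C: "0 \<le> C"
    for \<delta> a a' x0 b b' y0 C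
  proof -
    let ?m1 = "absg (z1 - h1 (x0, y0) *\<^sub>R u)" and ?m2 = "absg (z2 - h2 (x0, y0) *\<^sub>R u)"
    let ?W = "C *\<^sub>R \<phi> a b"
    have W0: "0 \<le> ?W" using wpos[OF cx cy] C by (simp add: scaleR_nonneg_nonneg)
    have "absg (sup z1 z2 - (max (h1 (x0, y0)) (h2 (x0, y0))) *\<^sub>R u) \<le> ?m1 + ?m2"
      unfolding max_scaleR_u by (rule absg_sup_diff)
    then have "inf (absg (sup z1 z2 - (max (h1 (x0, y0)) (h2 (x0, y0))) *\<^sub>R u)) ?W \<le> inf ?m1 ?W + inf ?m2 ?W"
      by (rule inf_two[OF W0 absg_nonneg absg_nonneg])
    also have "\<dots> \<le> (K1 * \<delta>) *\<^sub>R \<phi> a' b' + (K2 * \<delta>) *\<^sub>R \<phi> a' b'"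
      using I1(8)[OF d cell_mono[OF cx] cell_mono[OF cy] C] I2(8)[OF d cell_mono[OF cx] cell_mono[OF cy] C]
      by (intro add_mono) auto
    also have "\<dots> = ((K1 + K2) * \<delta>) *\<^sub>R \<phi> a' b'" by (simp add: algebra_simps)
    finally show ?thesis .
  qed
  show ?thesis
    by (rule InvI[of "A1 \<union> A2" "B1 \<union> B2" "K1 + K2"]) (use I1(1-5) I2(1-5) P1 P2 P3 in auto)
qed

lemma Inv_R: "(h, z) \<in> R \<Longrightarrow> Inv h z"
  by (induction rule: R.induct) (auto intro: Inv_gen Inv_add Inv_scl Inv_mx)

end

lemma scaleR_sum_list: "c *\<^sub>R (\<Sum>p\<leftarrow>P. f p) = (\<Sum>p\<leftarrow>P. c *\<^sub>R f p :: 'a::real_vector)"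
  by (induction P) (auto simp: scaleR_right_distrib)

lemma sum_list_nonneg': "(\<And>q. q \<in> set Q \<Longrightarrow> 0 \<le> f q) \<Longrightarrow> 0 \<le> (\<Sum>q\<leftarrow>Q. f q :: 'a::ordered_comm_monoid_add)"
  by (induction Q) auto

definition pt :: "('a \<Rightarrow> real) \<Rightarrow> 'a" where "pt a = (SOME x. 0 < a x)"

lemma cell_of: "cellok S a b \<Longrightarrow> pw A \<delta> a \<Longrightarrow> cell S A \<delta> a b (pt a)"
proof -
  assume c: "cellok S a b" and p: "pw A \<delta> a"
  have "\<forall>x. 0 < a x \<longrightarrow> (\<forall>f\<in>A. \<bar>f x - f (pt a)\<bar> \<le> \<delta>)"
  proof (intro allI impI)
    fix x assume x: "0 < a x"
    then have "0 < a (pt a)" unfolding pt_def by (rule someI)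
    with x p show "\<forall>f\<in>A. \<bar>f x - f (pt a)\<bar> \<le> \<delta>" unfolding pw_def by blast
  qed
  with c show ?thesis unfolding cell_def by blast
qed

context tp begin

lemma coverE: "finite A \<Longrightarrow> A \<subseteq> E \<Longrightarrow> \<exists>cA>0. \<exists>KA\<ge>0. \<forall>\<delta>>0. \<exists>P.
   (\<forall>p\<in>set P. cellok E (fst p) (snd p) \<and> pw A \<delta> (fst p)) \<and>
   (\<forall>x. cA \<le> (\<Sum>p\<leftarrow>P. fst p x) \<and> (\<Sum>p\<leftarrow>P. snd p x) \<le> KA)"
proof -
  assume fA: "finite A" and AE: "A \<subseteq> E"
  obtain As where As: "set As = A" using finite_list[OF fA] by blast
  have H: "f \<in> set As \<Longrightarrow> f \<in> E \<and> (\<exists>M. \<forall>x. \<bar>f x\<bar> \<le> M)" for f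
    using As AE boundE by blast
  show ?thesis
    apply (rule exI[of _ "1 / 2 ^ length As"], rule conjI, simp)
    apply (rule exI[of _ "4 ^ length As"], rule conjI, simp)
    using cover[OF rsE cE H] As by blast
qed

lemma coverF: "finite B \<Longrightarrow> B \<subseteq> F \<Longrightarrow> \<exists>cA>0. \<exists>KA\<ge>0. \<forall>\<delta>>0. \<exists>P.
   (\<forall>p\<in>set P. cellok F (fst p) (snd p) \<and> pw B \<delta> (fst p)) \<and>
   (\<forall>x. cA \<le> (\<Sum>p\<leftarrow>P. fst p x) \<and> (\<Sum>p\<leftarrow>P. snd p x) \<le> KA)"
  using tp.coverE[OF swap] by blast

lemma double_sum:
  assumes P: "\<And>p. p \<in> set P \<Longrightarrow> a p \<in> E" and Q: "\<And>q. q \<in> set Q \<Longrightarrow> b q \<in> F"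
  shows "(\<Sum>p\<leftarrow>P. \<Sum>q\<leftarrow>Q. \<phi> (a p) (b q)) = \<phi> (\<lambda>x. \<Sum>p\<leftarrow>P. a p x) (\<lambda>y. \<Sum>q\<leftarrow>Q. b q y)"
proof -
  have SB: "(\<lambda>y. \<Sum>q\<leftarrow>Q. b q y) \<in> F" by (rule rs_sum_list[OF rsF Q])
  have "(\<Sum>p\<leftarrow>P. \<Sum>q\<leftarrow>Q. \<phi> (a p) (b q)) = (\<Sum>p\<leftarrow>P. \<phi> (a p) (\<lambda>y. \<Sum>q\<leftarrow>Q. b q y))"
  proof (intro arg_cong[where f=sum_list] map_cong refl)
    fix p assume p: "p \<in> set P"
    show "(\<Sum>q\<leftarrow>Q. \<phi> (a p) (b q)) = \<phi> (a p) (\<lambda>y. \<Sum>q\<leftarrow>Q. b q y)"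
      by (rule lin_sum_list[OF lin2[OF P[OF p]] rsF Q, symmetric])
  qed
  also have "\<dots> = \<phi> (\<lambda>x. \<Sum>p\<leftarrow>P. a p x) (\<lambda>y. \<Sum>q\<leftarrow>Q. b q y)"
    by (rule lin_sum_list[OF lin1[OF SB] rsE, of P a, symmetric]) (rule P)
  finally show ?thesis .
qed

lemma R_nonpos: "(h, z) \<in> R \<Longrightarrow> (\<And>p. h p \<le> 0) \<Longrightarrow> z \<le> 0"
proof -
  assume hz: "(h, z) \<in> R" and hn: "\<And>p. h p \<le> 0"
  obtain A B K where I: "finite A" "A \<subseteq> E" "finite B" "B \<subseteq> F" "0 \<le> K" "absg z \<le> K *\<^sub>R u"
     "\<And>\<delta> x x' y y'. 0 \<le> \<delta> \<Longrightarrow> (\<forall>f\<in>A. \<bar>f x - f x'\<bar> \<le> \<delta>) \<Longrightarrow> (\<forall>g\<in>B. \<bar>g y - g y'\<bar> \<le> \<delta>) \<Longrightarrow>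
        \<bar>h (x, y) - h (x', y')\<bar> \<le> K * \<delta>"
     "\<And>\<delta> a a' x0 b b' y0 C. 0 \<le> \<delta> \<Longrightarrow> cell E A \<delta> a a' x0 \<Longrightarrow> cell F B \<delta> b b' y0 \<Longrightarrow> 0 \<le> C \<Longrightarrow>
        inf (absg (z - h (x0, y0) *\<^sub>R u)) (C *\<^sub>R \<phi> a b) \<le> (K * \<delta>) *\<^sub>R \<phi> a' b'"
    by (rule InvE[OF Inv_R[OF hz]], blast?)
  obtain cA KA where cA: "0 < cA" "0 \<le> KA" and covA: "\<And>\<delta>. 0 < \<delta> \<Longrightarrow> \<exists>P.
   (\<forall>p\<in>set P. cellok E (fst p) (snd p) \<and> pw A \<delta> (fst p)) \<and>
   (\<forall>x. cA \<le> (\<Sum>p\<leftarrow>P. fst p x) \<and> (\<Sum>p\<leftarrow>P. snd p x) \<le> KA)"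
    using coverE[OF I(1,2)] by blast
  obtain cB KB where cB: "0 < cB" "0 \<le> KB" and covB: "\<And>\<delta>. 0 < \<delta> \<Longrightarrow> \<exists>Q.
   (\<forall>q\<in>set Q. cellok F (fst q) (snd q) \<and> pw B \<delta> (fst q)) \<and>
   (\<forall>y. cB \<le> (\<Sum>q\<leftarrow>Q. fst q y) \<and> (\<Sum>q\<leftarrow>Q. snd q y) \<le> KB)"
    using coverF[OF I(3,4)] by blast
  define x0 where "x0 = sup z 0"
  have x00: "0 \<le> x0" unfolding x0_def by simp
  define K' where "K' = K * KA * KB"
  have K'0: "0 \<le> K'" unfolding K'_def using I(5) cA cB by simp
  have key: "x0 \<le> (\<delta> * K') *\<^sub>R u" if d: "0 < \<delta>" for \<delta>
  proof -
    obtain P where P1: "\<forall>p\<in>set P. cellok E (fst p) (snd p) \<and> pw A \<delta> (fst p)"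
      and P2: "\<forall>x. cA \<le> (\<Sum>p\<leftarrow>P. fst p x) \<and> (\<Sum>p\<leftarrow>P. snd p x) \<le> KA" using covA[OF d] by blast
    obtain Q where Q1: "\<forall>q\<in>set Q. cellok F (fst q) (snd q) \<and> pw B \<delta> (fst q)"
      and Q2: "\<forall>y. cB \<le> (\<Sum>q\<leftarrow>Q. fst q y) \<and> (\<Sum>q\<leftarrow>Q. snd q y) \<le> KB" using covB[OF d] by blast
    have PE: "fst p \<in> E" "snd p \<in> E" "\<And>x. 0 \<le> fst p x" "\<And>x. 0 \<le> snd p x" if "p \<in> set P" for p
      using P1 that unfolding cellok_def by auto
    have QF: "fst q \<in> F" "snd q \<in> F" "\<And>y. 0 \<le> fst q y" "\<And>y. 0 \<le> snd q y" if "q \<in> set Q" for q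
      using Q1 that unfolding cellok_def by auto
    have cellp: "cell E A \<delta> (fst p) (snd p) (pt (fst p))" if "p \<in> set P" for p
      using P1 that cell_of by blast
    have cellq: "cell F B \<delta> (fst q) (snd q) (pt (fst q))" if "q \<in> set Q" for q
      using Q1 that cell_of by blast
    define SA where "SA = (\<lambda>x. \<Sum>p\<leftarrow>P. fst p x)"
    define SB where "SB = (\<lambda>y. \<Sum>q\<leftarrow>Q. fst q y)"
    define TA where "TA = (\<lambda>x. \<Sum>p\<leftarrow>P. snd p x)"
    define TB where "TB = (\<lambda>y. \<Sum>q\<leftarrow>Q. snd q y)"
    have SAE: "SA \<in> E" unfolding SA_def by (rule rs_sum_list[OF rsE]) (rule PE)
    have TAE: "TA \<in> E" unfolding TA_def by (rule rs_sum_list[OF rsE]) (rule PE)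
    have SBF: "SB \<in> F" unfolding SB_def by (rule rs_sum_list[OF rsF]) (rule QF)
    have TBF: "TB \<in> F" unfolding TB_def by (rule rs_sum_list[OF rsF]) (rule QF)
    have SA0: "0 \<le> SA x" for x unfolding SA_def by (rule sum_list_nonneg) (auto intro: PE)
    have TB0: "0 \<le> TB y" for y unfolding TB_def by (rule sum_list_nonneg) (auto intro: QF)
    define Cc where "Cc = K / (cA * cB)"
    have Cc0: "0 \<le> Cc" unfolding Cc_def using I(5) cA cB by simp
    define w :: "('x\<Rightarrow>real)\<times>('x\<Rightarrow>real) \<Rightarrow> ('y\<Rightarrow>real)\<times>('y\<Rightarrow>real) \<Rightarrow> 'g"
      where "w = (\<lambda>p q. \<phi> (fst p) (fst q))"
    define w' :: "('x\<Rightarrow>real)\<times>('x\<Rightarrow>real) \<Rightarrow> ('y\<Rightarrow>real)\<times>('y\<Rightarrow>real) \<Rightarrow> 'g"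
      where "w' = (\<lambda>p q. \<phi> (snd p) (snd q))"
    have w0: "0 \<le> w p q" if "p \<in> set P" "q \<in> set Q" for p q
      unfolding w_def using that by (intro pos PE QF) auto
    have sumw: "(\<Sum>p\<leftarrow>P. \<Sum>q\<leftarrow>Q. w p q) = \<phi> SA SB"
      unfolding w_def SA_def SB_def by (rule double_sum) (auto intro: PE QF)
    have sumw': "(\<Sum>p\<leftarrow>P. \<Sum>q\<leftarrow>Q. w' p q) = \<phi> TA TB"
      unfolding w'_def TA_def TB_def by (rule double_sum) (auto intro: PE QF)
    have "(cA * cB) *\<^sub>R u = \<phi> (\<lambda>x. cA) (\<lambda>y. cB)"
      using const1[OF cF[of cB], of cA] const2[OF cE[of 1], of cB] by simp
    also have "\<dots> \<le> \<phi> SA (\<lambda>y. cB)" by (rule mono1[OF cF _ cE SAE]) (use cB P2 in \<open>auto simp: SA_def\<close>)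
    also have "\<dots> \<le> \<phi> SA SB" by (rule mono2[OF SAE SA0 cF SBF]) (use Q2 in \<open>auto simp: SB_def\<close>)
    finally have ule: "(cA * cB) *\<^sub>R u \<le> \<phi> SA SB" .
    have "x0 \<le> absg z" unfolding x0_def by (intro sup_least absg_ge(1) absg_nonneg)
    also have "\<dots> \<le> K *\<^sub>R u" by (rule I(6))
    also have "\<dots> = Cc *\<^sub>R ((cA * cB) *\<^sub>R u)" unfolding Cc_def using cA cB by simp
    also have "\<dots> \<le> Cc *\<^sub>R \<phi> SA SB" by (rule scaleR_left_mono[OF ule Cc0])
    also have "\<dots> = (\<Sum>p\<leftarrow>P. \<Sum>q\<leftarrow>Q. Cc *\<^sub>R w p q)" unfolding sumw[symmetric] by (simp add: scaleR_sum_list)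
    finally have x0le: "x0 \<le> (\<Sum>p\<leftarrow>P. \<Sum>q\<leftarrow>Q. Cc *\<^sub>R w p q)" .
    have rowpos: "0 \<le> Cc *\<^sub>R w p q" if "p \<in> set P" "q \<in> set Q" for p q
      using w0[OF that] Cc0 by (simp add: scaleR_nonneg_nonneg)
    have "x0 = inf x0 (\<Sum>p\<leftarrow>P. \<Sum>q\<leftarrow>Q. Cc *\<^sub>R w p q)" using x0le by (simp add: inf_absorb1)
    also have "\<dots> \<le> (\<Sum>p\<leftarrow>P. inf x0 (\<Sum>q\<leftarrow>Q. Cc *\<^sub>R w p q))"
      by (rule conjunct1[OF inf_sum_list_le[OF x00]], rule sum_list_nonneg', rule rowpos)
    also have "\<dots> \<le> (\<Sum>p\<leftarrow>P. \<Sum>q\<leftarrow>Q. inf x0 (Cc *\<^sub>R w p q))"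
    proof (rule sum_list_mono)
      fix p assume p: "p \<in> set P"
      show "inf x0 (\<Sum>q\<leftarrow>Q. Cc *\<^sub>R w p q) \<le> (\<Sum>q\<leftarrow>Q. inf x0 (Cc *\<^sub>R w p q))"
        by (rule conjunct1[OF inf_sum_list_le[OF x00]], rule rowpos[OF p])
    qed
    also have "\<dots> \<le> (\<Sum>p\<leftarrow>P. \<Sum>q\<leftarrow>Q. (K * \<delta>) *\<^sub>R w' p q)"
    proof (intro sum_list_mono)
      fix p q assume p: "p \<in> set P" and q: "q \<in> set Q"
      let ?t = "h (pt (fst p), pt (fst q))"
      have "z \<le> z - ?t *\<^sub>R u"
      proof -
        have "0 \<le> (- ?t) *\<^sub>R u" using hn upos by (intro scaleR_nonneg_nonneg) auto
        then show ?thesis by simp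
      qed
      then have "x0 \<le> absg (z - ?t *\<^sub>R u)" unfolding x0_def
        by (intro sup_least order.trans[OF _ absg_ge(1)] absg_nonneg)
      then have "inf x0 (Cc *\<^sub>R w p q) \<le> inf (absg (z - ?t *\<^sub>R u)) (Cc *\<^sub>R w p q)"
        by (rule inf_mono) simp
      also have "\<dots> \<le> (K * \<delta>) *\<^sub>R w' p q"
        unfolding w_def w'_def using d by (intro I(8) cellp cellq p q Cc0) simp
      finally show "inf x0 (Cc *\<^sub>R w p q) \<le> (K * \<delta>) *\<^sub>R w' p q" .
    qed
    also have "\<dots> = (K * \<delta>) *\<^sub>R \<phi> TA TB" unfolding sumw'[symmetric] by (simp add: scaleR_sum_list)
    also have "\<dots> \<le> (K * \<delta>) *\<^sub>R \<phi> (\<lambda>x. KA) (\<lambda>y. KB)"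
    proof (rule scaleR_left_mono)
      show "0 \<le> K * \<delta>" using I(5) d by simp
      have "\<phi> TA TB \<le> \<phi> (\<lambda>x. KA) TB" by (rule mono1[OF TBF TB0 TAE cE]) (use P2 in \<open>auto simp: TA_def\<close>)
      also have "\<dots> \<le> \<phi> (\<lambda>x. KA) (\<lambda>y. KB)" by (rule mono2[OF cE _ TBF cF]) (use cA Q2 in \<open>auto simp: TB_def\<close>)
      finally show "\<phi> TA TB \<le> \<phi> (\<lambda>x. KA) (\<lambda>y. KB)" .
    qed
    also have "\<dots> = (\<delta> * K') *\<^sub>R u"
      using const1[OF cF[of KB], of KA] const2[OF cE[of 1], of KB] by (simp add: K'_def algebra_simps)
    finally show ?thesis .
  qed
  have "x0 = 0"
  proof (rule archimedean[OF x00, of "K' *\<^sub>R u"], rule allI)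
    fix n :: nat
    show "real n *\<^sub>R x0 \<le> K' *\<^sub>R u"
    proof (cases "n = 0")
      case True then show ?thesis using K'0 upos by (simp add: scaleR_nonneg_nonneg)
    next
      case False
      then have np: "0 < real n" by simp
      have "real n *\<^sub>R x0 \<le> real n *\<^sub>R ((1 / real n * K') *\<^sub>R u)"
        by (rule scaleR_left_mono[OF key]) (use np in simp_all)
      also have "\<dots> = K' *\<^sub>R u" using np by simp
      finally show ?thesis .
    qed
  qed
  then show "z \<le> 0" unfolding x0_def by (metis sup_ge1)
qed

end

context tp begin

lemma R_diff: "(h1, z1) \<in> R \<Longrightarrow> (h2, z2) \<in> R \<Longrightarrow> ((\<lambda>p. h1 p - h2 p), z1 - z2) \<in> R"
proof -
  assume a: "(h1, z1) \<in> R" "(h2, z2) \<in> R"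
  have "((\<lambda>p. h1 p + (\<lambda>p. (-1) * h2 p) p), z1 + (-1) *\<^sub>R z2) \<in> R"
    by (rule R.add[OF a(1) R.scl[OF a(2)]])
  moreover have "(\<lambda>p. h1 p + (\<lambda>p. (-1) * h2 p) p) = (\<lambda>p. h1 p - h2 p)" by simp
  moreover have "z1 + (-1) *\<^sub>R z2 = z1 - z2" by simp
  ultimately show ?thesis by simp
qed

lemma R_fun: "(h, z1) \<in> R \<Longrightarrow> (h, z2) \<in> R \<Longrightarrow> z1 = z2"
proof -
  assume a: "(h, z1) \<in> R" "(h, z2) \<in> R"
  have "z1 - z2 \<le> 0" by (rule R_nonpos[OF R_diff[OF a(1) a(2)]]) simp
  moreover have "z2 - z1 \<le> 0" by (rule R_nonpos[OF R_diff[OF a(2) a(1)]]) simp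
  ultimately show ?thesis by simp
qed

lemma R_abs: "(h, z) \<in> R \<Longrightarrow> ((\<lambda>p. \<bar>h p\<bar>), absg z) \<in> R"
proof -
  assume a: "(h, z) \<in> R"
  have "((\<lambda>p. max (h p) ((\<lambda>p. (-1) * h p) p)), sup z ((-1) *\<^sub>R z)) \<in> R"
    by (rule R.mx[OF a R.scl[OF a]])
  moreover have "(\<lambda>p. max (h p) ((\<lambda>p. (-1) * h p) p)) = (\<lambda>p. \<bar>h p\<bar>)" by (auto simp: fun_eq_iff)
  moreover have "sup z ((-1) *\<^sub>R z) = absg z" by (simp add: absg_def)
  ultimately show ?thesis by simp
qed

lemma R_inj:
  assumes bi: "bi_injective E F \<phi>" and hz: "(h, 0) \<in> R"
  shows "h = (\<lambda>p. 0)"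
proof (rule ccontr)
  assume "h \<noteq> (\<lambda>p. 0)"
  then obtain x0 y0 where h0: "h (x0, y0) \<noteq> 0" by (auto simp: fun_eq_iff)
  define \<eta> where "\<eta> = \<bar>h (x0, y0)\<bar> / 2"
  have \<eta>0: "0 < \<eta>" unfolding \<eta>_def using h0 by simp
  obtain A B K where I: "finite A" "A \<subseteq> E" "finite B" "B \<subseteq> F" "0 \<le> K"
     "\<And>\<delta> x x' y y'. 0 \<le> \<delta> \<Longrightarrow> (\<forall>f\<in>A. \<bar>f x - f x'\<bar> \<le> \<delta>) \<Longrightarrow> (\<forall>g\<in>B. \<bar>g y - g y'\<bar> \<le> \<delta>) \<Longrightarrow>
        \<bar>h (x, y) - h (x', y')\<bar> \<le> K * \<delta>"
    by (rule InvE[OF Inv_R[OF hz]], blast?)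
  obtain cA KA where cA: "0 < cA" and covA: "\<And>\<delta>. 0 < \<delta> \<Longrightarrow> \<exists>P.
   (\<forall>p\<in>set P. cellok E (fst p) (snd p) \<and> pw A \<delta> (fst p)) \<and>
   (\<forall>x. cA \<le> (\<Sum>p\<leftarrow>P. fst p x) \<and> (\<Sum>p\<leftarrow>P. snd p x) \<le> KA)"
    using coverE[OF I(1,2)] by blast
  obtain cB KB where cB: "0 < cB" and covB: "\<And>\<delta>. 0 < \<delta> \<Longrightarrow> \<exists>Q.
   (\<forall>q\<in>set Q. cellok F (fst q) (snd q) \<and> pw B \<delta> (fst q)) \<and>
   (\<forall>y. cB \<le> (\<Sum>q\<leftarrow>Q. fst q y) \<and> (\<Sum>q\<leftarrow>Q. snd q y) \<le> KB)"
    using coverF[OF I(3,4)] by blast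
  define \<delta> where "\<delta> = \<eta> / (K + 1)"
  have d0: "0 < \<delta>" unfolding \<delta>_def using \<eta>0 I(5) by simp
  have Kd: "K * \<delta> < \<eta>"
  proof -
    have "K * \<delta> = \<eta> * (K / (K + 1))" unfolding \<delta>_def by simp
    also have "\<dots> < \<eta> * 1" using \<eta>0 I(5) by (intro mult_strict_left_mono) auto
    finally show ?thesis by simp
  qed
  obtain P where P1: "\<forall>p\<in>set P. cellok E (fst p) (snd p) \<and> pw A \<delta> (fst p)"
    and P2: "\<forall>x. cA \<le> (\<Sum>p\<leftarrow>P. fst p x)" using covA[OF d0] by blast
  obtain Q where Q1: "\<forall>q\<in>set Q. cellok F (fst q) (snd q) \<and> pw B \<delta> (fst q)"
    and Q2: "\<forall>y. cB \<le> (\<Sum>q\<leftarrow>Q. fst q y)" using covB[OF d0] by blast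
  have "\<exists>p\<in>set P. 0 < fst p x0"
  proof (rule ccontr)
    assume "\<not> ?thesis"
    then have "(\<Sum>p\<leftarrow>P. fst p x0) \<le> (\<Sum>p\<leftarrow>P. 0)" by (intro sum_list_mono) auto
    then show False using P2[rule_format, of x0] cA by (simp del: sum_list_map_eq_sum_count)
  qed
  then obtain p where p: "p \<in> set P" "0 < fst p x0" by blast
  have "\<exists>q\<in>set Q. 0 < fst q y0"
  proof (rule ccontr)
    assume "\<not> ?thesis"
    then have "(\<Sum>q\<leftarrow>Q. fst q y0) \<le> (\<Sum>q\<leftarrow>Q. 0)" by (intro sum_list_mono) auto
    then show False using Q2[rule_format, of y0] cB by (simp del: sum_list_map_eq_sum_count)
  qed
  then obtain q where q: "q \<in> set Q" "0 < fst q y0" by blast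
  define a where "a = fst p"
  define b where "b = fst q"
  have aE: "a \<in> E" and a01: "\<And>x. 0 \<le> a x \<and> a x \<le> 1" and pwa: "pw A \<delta> a"
    using P1 p unfolding a_def cellok_def by auto
  have bF: "b \<in> F" and b01: "\<And>y. 0 \<le> b y \<and> b y \<le> 1" and pwb: "pw B \<delta> b"
    using Q1 q unfolding b_def cellok_def by auto
  have a0: "0 < a x0" and b0: "0 < b y0" using p q unfolding a_def b_def by auto
  define k where "k = (\<lambda>p. chi a b p - (1 / \<eta>) * \<bar>h p\<bar>)"
  have kR: "(k, \<phi> a b - (1 / \<eta>) *\<^sub>R absg 0) \<in> R"
  proof -
    have "((\<lambda>p. chi a b p - (\<lambda>p. (1 / \<eta>) * \<bar>h p\<bar>) p), \<phi> a b - (1 / \<eta>) *\<^sub>R absg 0) \<in> R"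
      by (rule R_diff[OF R.gen[OF aE bF] R.scl[OF R_abs[OF hz]]])
    then show ?thesis unfolding k_def by simp
  qed
  have "k xy \<le> 0" for xy
  proof -
    obtain x y where xy: "xy = (x, y)" by (cases xy)
    show ?thesis
    proof (cases "0 < a x \<and> 0 < b y")
      case True
      have "\<forall>f\<in>A. \<bar>f x - f x0\<bar> \<le> \<delta>" using pwa True a0 unfolding pw_def by blast
      moreover have "\<forall>g\<in>B. \<bar>g y - g y0\<bar> \<le> \<delta>" using pwb True b0 unfolding pw_def by blast
      ultimately have "\<bar>h (x, y) - h (x0, y0)\<bar> \<le> K * \<delta>" using d0 I(6) by simp
      then have "\<eta> \<le> \<bar>h (x, y)\<bar>" using Kd unfolding \<eta>_def by linarith
      then have "1 \<le> (1 / \<eta>) * \<bar>h (x, y)\<bar>" using \<eta>0 by (simp add: field_simps)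
      moreover have "a x * b y \<le> 1" using a01[of x] b01[of y] by (simp add: mult_le_one)
      moreover have "k xy = a x * b y - (1 / \<eta>) * \<bar>h (x, y)\<bar>" unfolding k_def xy chi_def by simp
      ultimately show ?thesis by linarith
    next
      case False
      then have "a x * b y = 0" using a01[of x] b01[of y] by (auto simp: less_le)
      moreover have "0 \<le> (1 / \<eta>) * \<bar>h (x, y)\<bar>" using \<eta>0 by simp
      moreover have "k xy = a x * b y - (1 / \<eta>) * \<bar>h (x, y)\<bar>" unfolding k_def xy chi_def by simp
      ultimately show ?thesis by linarith
    qed
  qed
  then have "\<phi> a b - (1 / \<eta>) *\<^sub>R absg 0 \<le> 0" by (intro R_nonpos[OF kR])
  then have "\<phi> a b \<le> 0" by simp
  moreover have "0 \<le> \<phi> a b" using aE bF a01 b01 by (intro pos) auto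
  ultimately have "\<phi> a b = 0" by simp
  then have "a = (\<lambda>x. 0) \<or> b = (\<lambda>y. 0)" using bi aE bF unfolding bi_injective_def by blast
  then show False using a0 b0 by auto
qed

end

context tp begin

abbreviation "S0 \<equiv> {chi f g | f g. f \<in> E \<and> g \<in> F}"
abbreviation "G0 \<equiv> {\<phi> f g | f g. f \<in> E \<and> g \<in> F}"

lemma R_zero: "((\<lambda>p. 0), 0) \<in> R"
proof -
  have "((\<lambda>p. 0 * chi (\<lambda>x. 0) (\<lambda>y. 0) p), 0 *\<^sub>R \<phi> (\<lambda>x. 0) (\<lambda>y. 0)) \<in> R"
    by (rule R.scl[OF R.gen[OF cE cF]])
  then show ?thesis by simp
qed

lemma fst_R: "fst ` R = gen_riesz_fun S0"
proof
  show "fst ` R \<subseteq> gen_riesz_fun S0"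
  proof
    fix h assume "h \<in> fst ` R"
    then obtain z where hz: "(h, z) \<in> R" by force
    have "h \<in> W" if W: "riesz_subspace_fun W" "S0 \<subseteq> W" for W
      using hz
    proof (induction rule: R.induct)
      case (gen f g) then show ?case using W by blast
    next
      case (add h1 z1 h2 z2) then show ?case using rs_add[OF W(1)] by blast
    next
      case (scl h z c) then show ?case using rs_scale[OF W(1)] by blast
    next
      case (mx h1 z1 h2 z2) then show ?case using rs_max[OF W(1)] by blast
    qed
    then show "h \<in> gen_riesz_fun S0" unfolding gen_riesz_fun_def by blast
  qed
  have "riesz_subspace_fun (fst ` R)"
    unfolding riesz_subspace_fun_def
  proof (intro conjI ballI allI)
    show "(\<lambda>x. 0) \<in> fst ` R" using R_zero by force
    fix f g assume "f \<in> fst ` R" "g \<in> fst ` R"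
    then obtain zf zg where "(f, zf) \<in> R" "(g, zg) \<in> R" by force
    then show "(\<lambda>x. f x + g x) \<in> fst ` R" "(\<lambda>x. max (f x) (g x)) \<in> fst ` R"
      using R.add R.mx by force+
  next
    fix c f assume "f \<in> fst ` R"
    then obtain zf where "(f, zf) \<in> R" by force
    then show "(\<lambda>x. c * f x) \<in> fst ` R" using R.scl by force
  qed
  moreover have "S0 \<subseteq> fst ` R" using R.gen by force
  ultimately show "gen_riesz_fun S0 \<subseteq> fst ` R" unfolding gen_riesz_fun_def by blast
qed

lemma snd_R: "snd ` R = gen_riesz G0"
proof
  show "snd ` R \<subseteq> gen_riesz G0"
  proof
    fix z assume "z \<in> snd ` R"
    then obtain h where hz: "(h, z) \<in> R" by force
    have "z \<in> W" if W: "riesz_subspace W" "G0 \<subseteq> W" for W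
      using hz
    proof (induction rule: R.induct)
      case (gen f g) then show ?case using W by blast
    next
      case (add h1 z1 h2 z2) then show ?case using W(1) unfolding riesz_subspace_def by blast
    next
      case (scl h z c) then show ?case using W(1) unfolding riesz_subspace_def by blast
    next
      case (mx h1 z1 h2 z2) then show ?case using W(1) unfolding riesz_subspace_def by blast
    qed
    then show "z \<in> gen_riesz G0" unfolding gen_riesz_def by blast
  qed
  have "riesz_subspace (snd ` R)"
    unfolding riesz_subspace_def
  proof (intro conjI ballI allI)
    show "0 \<in> snd ` R" using R_zero by force
    fix f g assume "f \<in> snd ` R" "g \<in> snd ` R"
    then obtain zf zg where "(zf, f) \<in> R" "(zg, g) \<in> R" by force
    then show "f + g \<in> snd ` R" "sup f g \<in> snd ` R"
      using R.add R.mx by force+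
  next
    fix c f assume "f \<in> snd ` R"
    then obtain zf where "(zf, f) \<in> R" by force
    then show "c *\<^sub>R f \<in> snd ` R" using R.scl by force
  qed
  moreover have "G0 \<subseteq> snd ` R" using R.gen by force
  ultimately show "gen_riesz G0 \<subseteq> snd ` R" unfolding gen_riesz_def by blast
qed

definition TT where "TT h = (THE z. (h, z) \<in> R)"

lemma TT_eq: "(h, z) \<in> R \<Longrightarrow> TT h = z"
  unfolding TT_def using R_fun by blast

lemma TT_R: "h \<in> gen_riesz_fun S0 \<Longrightarrow> (h, TT h) \<in> R"
  using fst_R TT_eq by force

lemma main:
  "\<exists>T. riesz_hom_on (gen_riesz_fun S0) T
            \<and> (\<forall>f\<in>E. \<forall>g\<in>F. \<phi> f g = T (chi f g))
            \<and> (\<forall>T'. riesz_hom_on (gen_riesz_fun S0) T'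
                    \<and> (\<forall>f\<in>E. \<forall>g\<in>F. \<phi> f g = T' (chi f g))
                    \<longrightarrow> (\<forall>h\<in>gen_riesz_fun S0. T' h = T h))
            \<and> (bi_injective E F \<phi> \<longrightarrow>
                 riesz_iso_onto (gen_riesz_fun S0) (gen_riesz G0) T)"
proof (intro exI[of _ TT] conjI allI impI ballI)
  let ?D = "gen_riesz_fun S0"
  show hom: "riesz_hom_on ?D TT"
    unfolding riesz_hom_on_def
  proof (intro conjI ballI allI)
    fix f g assume f: "f \<in> ?D" and g: "g \<in> ?D"
    show "TT (\<lambda>x. f x + g x) = TT f + TT g" by (rule TT_eq[OF R.add[OF TT_R[OF f] TT_R[OF g]]])
    show "TT (\<lambda>x. max (f x) (g x)) = sup (TT f) (TT g)" by (rule TT_eq[OF R.mx[OF TT_R[OF f] TT_R[OF g]]])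
  next
    fix c f assume f: "f \<in> ?D"
    show "TT (\<lambda>x. c * f x) = c *\<^sub>R TT f" by (rule TT_eq[OF R.scl[OF TT_R[OF f]]])
  qed
  show "\<And>f g. f \<in> E \<Longrightarrow> g \<in> F \<Longrightarrow> \<phi> f g = TT (chi f g)"
    using TT_eq[OF R.gen] by simp
  show "T' h = TT h" if T': "riesz_hom_on ?D T' \<and> (\<forall>f\<in>E. \<forall>g\<in>F. \<phi> f g = T' (chi f g))"
    and h: "h \<in> ?D" for T' h
  proof -
    have H: "riesz_hom_on ?D T'" and G: "\<forall>f\<in>E. \<forall>g\<in>F. \<phi> f g = T' (chi f g)" using T' by auto
    have inD: "(k, z) \<in> R \<Longrightarrow> k \<in> ?D" for k z using fst_R by force
    have "T' k = z" if "(k, z) \<in> R" for k z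
      using that
    proof (induction rule: R.induct)
      case (gen f g) then show ?case using G by simp
    next
      case (add h1 z1 h2 z2) then show ?case using H inD unfolding riesz_hom_on_def by simp
    next
      case (scl h z c) then show ?case using H inD unfolding riesz_hom_on_def by simp
    next
      case (mx h1 z1 h2 z2) then show ?case using H inD unfolding riesz_hom_on_def by simp
    qed
    then show ?thesis using TT_R[OF h] by simp
  qed
  assume bi: "bi_injective E F \<phi>"
  have inj: "inj_on TT ?D"
  proof (rule inj_onI)
    fix h1 h2 assume h1: "h1 \<in> ?D" and h2: "h2 \<in> ?D" and eq: "TT h1 = TT h2"
    have "((\<lambda>p. h1 p - h2 p), TT h1 - TT h2) \<in> R" by (rule R_diff[OF TT_R[OF h1] TT_R[OF h2]])
    then have "((\<lambda>p. h1 p - h2 p), 0) \<in> R" using eq by simp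
    then have "(\<lambda>p. h1 p - h2 p) = (\<lambda>p. 0)" by (rule R_inj[OF bi])
    then show "h1 = h2" by (auto simp: fun_eq_iff dest: fun_cong)
  qed
  have img: "TT ` ?D = gen_riesz G0"
  proof -
    have "TT ` ?D = snd ` R"
    proof
      show "TT ` ?D \<subseteq> snd ` R" using TT_R by force
      show "snd ` R \<subseteq> TT ` ?D"
      proof
        fix z assume "z \<in> snd ` R"
        then obtain h where hz: "(h, z) \<in> R" by force
        then have "h \<in> ?D" using fst_R by force
        moreover have "TT h = z" by (rule TT_eq[OF hz])
        ultimately show "z \<in> TT ` ?D" by force
      qed
    qed
    then show ?thesis using snd_R by simp
  qed
  show "riesz_iso_onto ?D (gen_riesz G0) TT"
    unfolding riesz_iso_onto_def
  proof (intro conjI ballI)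
    show "riesz_hom_on ?D TT" by (rule hom)
    show "bij_betw TT ?D (gen_riesz G0)" using inj img by (simp add: bij_betw_def)
    fix a b assume a: "a \<in> gen_riesz G0" and b: "b \<in> gen_riesz G0"
    obtain h1 where h1: "h1 \<in> ?D" "a = TT h1" using a img by force
    obtain h2 where h2: "h2 \<in> ?D" "b = TT h2" using b img by force
    have mD: "(\<lambda>x. max (h1 x) (h2 x)) \<in> ?D"
      using R.mx[OF TT_R[OF h1(1)] TT_R[OF h2(1)]] fst_R by force
    have "sup a b = TT (\<lambda>x. max (h1 x) (h2 x))"
      using hom h1 h2 unfolding riesz_hom_on_def by simp
    then have "inv_into ?D TT (sup a b) = (\<lambda>x. max (h1 x) (h2 x))"
      using inv_into_f_f[OF inj mD] by simp
    moreover have "inv_into ?D TT a = h1" using inv_into_f_f[OF inj h1(1)] h1(2) by simp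
    moreover have "inv_into ?D TT b = h2" using inv_into_f_f[OF inj h2(1)] h2(2) by simp
    ultimately show "inv_into ?D TT (sup a b) = (\<lambda>x. max (inv_into ?D TT a x) (inv_into ?D TT b x))" by simp
  qed
qed

end

theorem theorem3p4:
  fixes E :: "('x::t2_space \<Rightarrow> real) set"
    and F :: "('y::t2_space \<Rightarrow> real) set"
    and \<phi> :: "('x \<Rightarrow> real) \<Rightarrow> ('y \<Rightarrow> real) \<Rightarrow> 'g::archimedean_riesz_space"
  assumes "compact (UNIV :: 'x set)" and "compact (UNIV :: 'y set)"
    and "E \<subseteq> cfun" and "riesz_subspace_fun E" and "sup_dense E" and "\<forall>c. (\<lambda>x. c) \<in> E"
    and "F \<subseteq> cfun" and "riesz_subspace_fun F" and "sup_dense F" and "\<forall>c. (\<lambda>y. c) \<in> F"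
    and "riesz_bimorphism E F \<phi>"
  shows "\<exists>T. riesz_hom_on (gen_riesz_fun {chi f g | f g. f \<in> E \<and> g \<in> F}) T
            \<and> (\<forall>f\<in>E. \<forall>g\<in>F. \<phi> f g = T (chi f g))
            \<and> (\<forall>T'. riesz_hom_on (gen_riesz_fun {chi f g | f g. f \<in> E \<and> g \<in> F}) T'
                    \<and> (\<forall>f\<in>E. \<forall>g\<in>F. \<phi> f g = T' (chi f g))
                    \<longrightarrow> (\<forall>h\<in>gen_riesz_fun {chi f g | f g. f \<in> E \<and> g \<in> F}. T' h = T h))
            \<and> (bi_injective E F \<phi> \<longrightarrow>
                 riesz_iso_onto (gen_riesz_fun {chi f g | f g. f \<in> E \<and> g \<in> F})
                                (gen_riesz {\<phi> f g | f g. f \<in> E \<and> g \<in> F}) T)"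
proof -
  interpret tp E F \<phi>
    by (unfold_locales) (use assms in auto)
  show ?thesis by (rule main)
qed

end
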